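(* (Principle of Optimality.) Consider an imprecise hidden Markov model as in the context with a fixed output sequence $o_{1:n}\in\mathcal{O}_{1:n}$, under the positivity assumption. Let $k\in\{1,\dots,n-1\}$, $z_{k-1}\in\mathcal{X}_{k-1}$ and $\hat{x}_{k:n}\in\mathcal{X}_{k:n}$. If $\underline{Q}_k(\{\hat{x}_k\}\mid z_{k-1})>0$ and $\underline{S}_k(\{o_k\}\mid\hat{x}_k)>0$, then $$\hat{x}_{k:n}\in\mathrm{opt}(\mathcal{X}_{k:n}\mid z_{k-1},o_{k:n})\ \Rightarrow\ \hat{x}_{k+1:n}\in\mathrm{opt}(\mathcal{X}_{k+1:n}\mid \hat{x}_k,o_{k+1:n}).$$
   Context: Setting: $n\ge1$; $\mathcal{X}_0=\{x_0\}$ a singleton; finite non-empty sets $\mathcal{X}_1,\dots,\mathcal{X}_n$, $\mathcal{O}_1,\dots,\mathcal{O}_n$; $\mathcal{X}_{k:\ell}=\times_{r=k}^\ell\mathcal{X}_r$, $\mathcal{O}_{k:\ell}=\times_{r=k}^\ell\mathcal{O}_r$. Gambles are real maps on finite sets; a coherent lower prevision $\underline{P}$ satisfies $\underline{P}(f)\ge\min f$, $\underline{P}(\lambda f)=\lambda\underline{P}(f)$ for $\lambda\ge0$, $\underline{P}(f+g)\ge\underline{P}(f)+\underline{P}(g)$; $\overline{P}(f)=-\underline{P}(-f)$; $\underline{P}(A)=\underline{P}(\mathbb{I}_A)$. Local models: coherent $\underline{Q}_k(\cdot\mid z_{k-1})$ on gambles on $\mathcal{X}_k$ ($z_{k-1}\in\mathcal{X}_{k-1}$)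 and $\underline{S}_k(\cdot\mid z_k)$ on gambles on $\mathcal{O}_k$ ($z_k\in\mathcal{X}_k$), $k=1,\dots,n$. Joint models: $\underline{E}_n(\cdot\mid z_n):=\underline{S}_n(\cdot\mid z_n)$; for $k<n$, $\underline{E}_k(\cdot\mid X_k)$ (on gambles on $\mathcal{X}_{k+1:n}\times\mathcal{O}_{k:n}$) is the conditionally independent natural extension of $\underline{S}_k(\cdot\mid X_k)$ and $\underline{P}_{k+1}(\cdot\mid X_k)$ (the pointwise smallest separately coherent conditional lower prevision jointly coherent with and extending both, such that given $X_k$, $O_k$ and $(X_{k+1:n},O_{k+1:n})$ are epistemically irrelevant to each other); for gambles $f$ on $\mathcal{X}_{k:n}\times\mathcal{O}_{k:n}$, $\underline{P}_k(f\mid z_{k-1}):=\underline{Q}_k\big(\sum_{z_k}\mathbb{I}_{\{z_k\}}\underline{E}_k(f(z_k,\cdot)\mid z_k)\,\big|\,z_{k-1}\big)$. Standing positivity assumption: $\overline{Q}_k(\{z_k\}\mid z_{k-1})>0$ and $\overline{S}_k(\{o_k\}\mid z_k)>0$ for all $k,z_{k-1},z_k,o_k$. Maximal subsequences: for $k\in\{1,\dots,n\}$ and $z_{k-1}\in\mathcal{X}_{k-1}$, $\hat{x}_{k:n}\in\mathrm{opt}(\mathcal{X}_{k:n}\mid z_{k-1},o_{k:n})$ iff for all $x_{k:n}\in\mathcal{X}_{k:n}$, $\underline{P}_k\big(\mathbb{I}_{o_{k:n}}[\mathbb{I}_{x_{k:n}}-\mathbb{I}_{\hat{x}_{k:n}}]\,\big|\,z_{k-1}\big)\le0$,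 where $\mathbb{I}_{x_{k:n}},\mathbb{I}_{o_{k:n}}$ are indicators of singletons regarded as gambles on $\mathcal{X}_{k:n}\times\mathcal{O}_{k:n}$. *)

theory Defs
  imports Complex_Main "HOL-Library.FuncSet" "HOL-Library.Indicator_Function"
begin

text \<open>Coherence relative to the possibility space A (the three axioms of the paper;
  they imply that P f only depends on the values of f on A).\<close>

definition coherent_on :: "'a set \<Rightarrow> (('a \<Rightarrow> real) \<Rightarrow> real) \<Rightarrow> bool" where
  "coherent_on A P \<longleftrightarrow>
     (\<forall>f. P f \<ge> Min (f ` A)) \<and>
     (\<forall>c f. c \<ge> 0 \<longrightarrow> P (\<lambda>x. c * f x) = c * P f) \<and>
     (\<forall>f g. P (\<lambda>x. f x + g x) \<ge> P f + P g)"

definition upper :: "(('a \<Rightarrow> real) \<Rightarrow> real) \<Rightarrow> ('a \<Rightarrow> real) \<Rightarrow> real" where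
  "upper P f = - P (\<lambda>x. - f x)"

text \<open>Besides the joint P there are the two conditional lower
  previsions expressing epistemic irrelevance in both directions:
  given B = b the model for A is P1 (partition {A \<times> {b} | b \<in> B}), and
  given A = a the model for B is P2 (partition {{a} \<times> B | a \<in> A}).
  The unconditional P corresponds to the trivial partition {A \<times> B}.
  G-gambles and supports as in Walley (1991), Sect. 6.2/7.1.\<close>

definition G0 :: "(('a \<times> 'b \<Rightarrow> real) \<Rightarrow> real) \<Rightarrow> ('a \<times> 'b \<Rightarrow> real) \<Rightarrow> 'a \<times> 'b \<Rightarrow> real" where
  "G0 P f = (\<lambda>w. f w - P f)"

definition G1 :: "(('a \<Rightarrow> real) \<Rightarrow> real) \<Rightarrow> ('a \<times> 'b \<Rightarrow> real) \<Rightarrow> 'a \<times> 'b \<Rightarrow> real" where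
  "G1 P1 f = (\<lambda>(a, b). f (a, b) - P1 (\<lambda>a'. f (a', b)))"

definition G2 :: "(('b \<Rightarrow> real) \<Rightarrow> real) \<Rightarrow> ('a \<times> 'b \<Rightarrow> real) \<Rightarrow> 'a \<times> 'b \<Rightarrow> real" where
  "G2 P2 f = (\<lambda>(a, b). f (a, b) - P2 (\<lambda>b'. f (a, b')))"

definition S0 :: "'a set \<Rightarrow> 'b set \<Rightarrow> ('a \<times> 'b \<Rightarrow> real) \<Rightarrow> ('a \<times> 'b) set" where
  "S0 A B f = (if \<exists>w \<in> A \<times> B. f w \<noteq> 0 then A \<times> B else {})"

definition S1 :: "'a set \<Rightarrow> 'b set \<Rightarrow> ('a \<times> 'b \<Rightarrow> real) \<Rightarrow> ('a \<times> 'b) set" where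
  "S1 A B f = {(a, b) \<in> A \<times> B. \<exists>a' \<in> A. f (a', b) \<noteq> 0}"

definition S2 :: "'a set \<Rightarrow> 'b set \<Rightarrow> ('a \<times> 'b \<Rightarrow> real) \<Rightarrow> ('a \<times> 'b) set" where
  "S2 A B f = {(a, b) \<in> A \<times> B. \<exists>b' \<in> B. f (a, b') \<noteq> 0}"

text \<open>Walley's (joint) coherence of P, P1(.|B), P2(.|A) (Walley 1991, Def. 7.1.4(b)).\<close>

definition jointly_coherent ::
  "'a set \<Rightarrow> 'b set \<Rightarrow> (('a \<times> 'b \<Rightarrow> real) \<Rightarrow> real) \<Rightarrow>
   (('a \<Rightarrow> real) \<Rightarrow> real) \<Rightarrow> (('b \<Rightarrow> real) \<Rightarrow> real) \<Rightarrow> bool" where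
  "jointly_coherent A B P P1 P2 \<longleftrightarrow>
    (\<forall>f0 f1 f2 g.
       let D = (\<lambda>w. G0 P f0 w + G1 P1 f1 w + G2 P2 f2 w);
           U = S0 A B f0 \<union> S1 A B f1 \<union> S2 A B f2
       in Max ((\<lambda>w. D w - (g w - P g)) ` (A \<times> B \<union> U)) \<ge> 0
        \<and> (\<forall>b \<in> B. Max ((\<lambda>w. D w - indicator (A \<times> {b}) w * (g w - P1 (\<lambda>a. g (a, b))))
                          ` (A \<times> {b} \<union> U)) \<ge> 0)
        \<and> (\<forall>a \<in> A. Max ((\<lambda>w. D w - indicator ({a} \<times> B) w * (g w - P2 (\<lambda>b. g (a, b))))
                          ` ({a} \<times> B \<union> U)) \<ge> 0))"

definition indep_product ::
  "'a set \<Rightarrow> 'b set \<Rightarrow> (('a \<Rightarrow> real) \<Rightarrow> real) \<Rightarrow> (('b \<Rightarrow> real) \<Rightarrow> real) \<Rightarrow>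
   (('a \<times> 'b \<Rightarrow> real) \<Rightarrow> real) \<Rightarrow> bool" where
  "indep_product A B P1 P2 P \<longleftrightarrow>
     coherent_on (A \<times> B) P \<and>
     (\<forall>g. P (\<lambda>(a, b). g a) = P1 g) \<and>
     (\<forall>h. P (\<lambda>(a, b). h b) = P2 h) \<and>
     jointly_coherent A B P P1 P2"

definition indep_nat_ext ::
  "'a set \<Rightarrow> 'b set \<Rightarrow> (('a \<Rightarrow> real) \<Rightarrow> real) \<Rightarrow> (('b \<Rightarrow> real) \<Rightarrow> real) \<Rightarrow>
   ('a \<times> 'b \<Rightarrow> real) \<Rightarrow> real" where
  "indep_nat_ext A B P1 P2 f = Inf {P f | P. indep_product A B P1 P2 P}"

text \<open>All state spaces X_k live in one type 'x (carriers Xs k), all output spaces in 'o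
  (carriers Os k). A state sequence x_{k:n} is an element of PiE {k..n} Xs, an output
  sequence o_{k:n} an element of PiE {k..n} Os. Local models: Q k z (gambles on Xs k), z \<in> Xs (k-1);
  S k z (gambles on Os k), z \<in> Xs k.

  Erec n Xs Os Q S j z is E_{n-j}(. | z) (a lower prevision on gambles on
  X_{n-j+1:n} \<times> O_{n-j:n}).\<close>

type_synonym ('x, 'o) seqgamble = "(nat \<Rightarrow> 'x) \<times> (nat \<Rightarrow> 'o) \<Rightarrow> real"

fun Erec :: "nat \<Rightarrow> (nat \<Rightarrow> 'x set) \<Rightarrow> (nat \<Rightarrow> 'o set) \<Rightarrow>
    (nat \<Rightarrow> 'x \<Rightarrow> ('x \<Rightarrow> real) \<Rightarrow> real) \<Rightarrow> (nat \<Rightarrow> 'x \<Rightarrow> ('o \<Rightarrow> real) \<Rightarrow> real) \<Rightarrow>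
    nat \<Rightarrow> 'x \<Rightarrow> ('x, 'o) seqgamble \<Rightarrow> real" where
  "Erec n Xs Os Q S 0 z g = S n z (\<lambda>on. g (\<lambda>_. undefined, (\<lambda>_. undefined)(n := on)))"
| "Erec n Xs Os Q S (Suc j) z g =
     (let k = n - Suc j in
      indep_nat_ext (Os k) ((PiE {Suc k..n} Xs) \<times> (PiE {Suc k..n} Os))
        (S k z)
        (\<lambda>h. Q (Suc k) z (\<lambda>zk. Erec n Xs Os Q S j zk (\<lambda>(x, y). h (x(Suc k := zk), y))))
        (\<lambda>(ok, (x, p')). g (x, p'(k := ok))))"

definition Ehmm where
  "Ehmm n Xs Os Q S k = Erec n Xs Os Q S (n - k)"

definition Phmm :: "nat \<Rightarrow> (nat \<Rightarrow> 'x set) \<Rightarrow> (nat \<Rightarrow> 'o set) \<Rightarrow>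
    (nat \<Rightarrow> 'x \<Rightarrow> ('x \<Rightarrow> real) \<Rightarrow> real) \<Rightarrow> (nat \<Rightarrow> 'x \<Rightarrow> ('o \<Rightarrow> real) \<Rightarrow> real) \<Rightarrow>
    nat \<Rightarrow> 'x \<Rightarrow> ('x, 'o) seqgamble \<Rightarrow> real" where
  "Phmm n Xs Os Q S k z f =
     Q k z (\<lambda>zk. Ehmm n Xs Os Q S k zk (\<lambda>(x, y). f (x(k := zk), y)))"

text \<open>Maximal subsequences opt(X_{k:n} | z, o_{k:n}); the full output sequence o is given
  as a map, only its values on {k..n} matter.\<close>
definition opt :: "nat \<Rightarrow> (nat \<Rightarrow> 'x set) \<Rightarrow> (nat \<Rightarrow> 'o set) \<Rightarrow>
    (nat \<Rightarrow> 'x \<Rightarrow> ('x \<Rightarrow> real) \<Rightarrow> real) \<Rightarrow> (nat \<Rightarrow> 'x \<Rightarrow> ('o \<Rightarrow> real) \<Rightarrow> real) \<Rightarrow>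
    nat \<Rightarrow> 'x \<Rightarrow> (nat \<Rightarrow> 'o) \<Rightarrow> (nat \<Rightarrow> 'x) set" where
  "opt n Xs Os Q S k z os =
     {xh \<in> PiE {k..n} Xs. \<forall>x \<in> PiE {k..n} Xs.
        Phmm n Xs Os Q S k z
          (\<lambda>(x', p'). (if \<forall>i \<in> {k..n}. p' i = os i then 1 else 0) *
                       ((if \<forall>i \<in> {k..n}. x' i = x i then 1 else 0)
                        - (if \<forall>i \<in> {k..n}. x' i = xh i then 1 else 0))) \<le> 0}"

end

theory Submission
  imports Defs
begin


lemma coh_Min: "coherent_on A P \<Longrightarrow> P f \<ge> Min (f ` A)"
  unfolding coherent_on_def by blast
lemma coh_hom: "coherent_on A P \<Longrightarrow> c \<ge> 0 \<Longrightarrow> P (\<lambda>x. c * f x) = c * P f"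
  unfolding coherent_on_def by blast
lemma coh_add: "coherent_on A P \<Longrightarrow> P (\<lambda>x. f x + g x) \<ge> P f + P g"
  unfolding coherent_on_def by blast

lemma coh_zero: "coherent_on A P \<Longrightarrow> P (\<lambda>x. 0) = 0"
  using coh_hom[of A P 0 "\<lambda>x. 0"] by simp

lemma coh_cong:
  assumes "coherent_on A P" "finite A" "A \<noteq> {}" "\<And>x. x \<in> A \<Longrightarrow> f x = g x"
  shows "P f = P g"
proof -
  have *: "P f \<ge> P g" if "\<And>x. x \<in> A \<Longrightarrow> f x = g x" for f g
  proof -
    have i: "(\<lambda>x. f x - g x) ` A = {0}" using that assms(3) by auto
    have "P (\<lambda>x. g x + (f x - g x)) \<ge> P g + P (\<lambda>x. f x - g x)" by (rule coh_add[OF assms(1)])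
    moreover have "P (\<lambda>x. f x - g x) \<ge> 0" using coh_Min[OF assms(1), of "\<lambda>x. f x - g x"] i by simp
    ultimately show ?thesis by simp
  qed
  show ?thesis using *[of f g] *[of g f] assms(4) by (metis order_antisym)
qed

lemma coh_mono:
  assumes "coherent_on A P" "finite A" "A \<noteq> {}" "\<And>x. x \<in> A \<Longrightarrow> g x \<le> f x"
  shows "P g \<le> P f"
proof -
  have "P (\<lambda>x. g x + (f x - g x)) \<ge> P g + P (\<lambda>x. f x - g x)" by (rule coh_add[OF assms(1)])
  moreover have "Min ((\<lambda>x. f x - g x) ` A) \<ge> 0" using assms by (simp add: Min_ge_iff)
  hence "P (\<lambda>x. f x - g x) \<ge> 0" using coh_Min[OF assms(1), of "\<lambda>x. f x - g x"] by simp
  ultimately show ?thesis by simp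
qed

lemma coh_const:
  assumes "coherent_on A P" "A \<noteq> {}"
  shows "P (\<lambda>x. c) = c"
proof -
  have a: "P (\<lambda>x. c) \<ge> c" "P (\<lambda>x. - c) \<ge> - c"
    using coh_Min[OF assms(1), of "\<lambda>x. c"] coh_Min[OF assms(1), of "\<lambda>x. -c"] assms(2)
    by (simp_all add: image_constant_conv)
  have "P (\<lambda>x. c + - c) \<ge> P (\<lambda>x. c) + P (\<lambda>x. - c)" by (rule coh_add[OF assms(1)])
  hence "P (\<lambda>x. c) + P (\<lambda>x. - c) \<le> 0" using coh_zero[OF assms(1)] by simp
  thus ?thesis using a by linarith
qed

lemma coh_le_upper: "coherent_on A P \<Longrightarrow> P f \<le> upper P f"
  unfolding upper_def using coh_add[of A P f "\<lambda>x. - f x"] coh_zero[of A P] by simp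

lemma upper_add: "coherent_on A P \<Longrightarrow> upper P (\<lambda>x. f x + g x) \<le> upper P f + upper P g"
  unfolding upper_def using coh_add[of A P "\<lambda>x. - f x" "\<lambda>x. - g x"] by simp

lemma upper_hom: "coherent_on A P \<Longrightarrow> c \<ge> 0 \<Longrightarrow> upper P (\<lambda>x. c * f x) = c * upper P f"
  unfolding upper_def using coh_hom[of A P c "\<lambda>x. - f x"] by simp

lemma upper_cong: "coherent_on A P \<Longrightarrow> finite A \<Longrightarrow> A \<noteq> {} \<Longrightarrow> (\<And>x. x \<in> A \<Longrightarrow> f x = g x)
   \<Longrightarrow> upper P f = upper P g"
proof -
  assume a: "coherent_on A P" "finite A" "A \<noteq> {}" "\<And>x. x \<in> A \<Longrightarrow> f x = g x"
  have "P (\<lambda>x. - f x) = P (\<lambda>x. - g x)" by (rule coh_cong[OF a(1-3)]) (simp add: a(4))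
  thus ?thesis unfolding upper_def by simp
qed



definition ex :: "'a set \<Rightarrow> ('a \<Rightarrow> real) \<Rightarrow> ('a \<Rightarrow> real) \<Rightarrow> real" where
  "ex A p f = (\<Sum>a\<in>A. p a * f a)"

definition cred :: "'a set \<Rightarrow> (('a \<Rightarrow> real) \<Rightarrow> real) \<Rightarrow> ('a \<Rightarrow> real) set" where
  "cred A P = {p. (\<forall>a\<in>A. 0 \<le> p a) \<and> sum p A = 1 \<and> (\<forall>f. P f \<le> ex A p f)}"

definition hbok :: "(('a \<Rightarrow> real) \<Rightarrow> real) \<Rightarrow> nat \<Rightarrow> (nat \<Rightarrow> 'a \<Rightarrow> real) \<Rightarrow> (nat \<Rightarrow> real) \<Rightarrow> bool" where
  "hbok q m hs ls \<longleftrightarrow> (\<forall>c. (\<Sum>i<m. c i * ls i) \<le> q (\<lambda>x. \<Sum>i<m. c i * hs i x))"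

lemma hb_step:
  fixes q :: "('a \<Rightarrow> real) \<Rightarrow> real"
  assumes sub: "\<And>f g. q (\<lambda>x. f x + g x) \<le> q f + q g"
    and hom: "\<And>c f. c \<ge> 0 \<Longrightarrow> q (\<lambda>x. c * f x) = c * q f"
    and ok: "hbok q m hs ls"
  shows "\<exists>l. hbok q (Suc m) hs (ls(m := l))"
proof -
  define lo where "lo c = (\<Sum>i<m. c i * ls i) - q (\<lambda>x. - hs m x + (\<Sum>i<m. c i * hs i x))" for c
  define up where "up d = q (\<lambda>x. hs m x + (\<Sum>i<m. d i * hs i x)) - (\<Sum>i<m. d i * ls i)" for d
  have key: "lo c \<le> up d" for c d
  proof -
    have "(\<Sum>i<m. (c i + d i) * ls i) \<le> q (\<lambda>x. \<Sum>i<m. (c i + d i) * hs i x)"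
      using ok[unfolded hbok_def, rule_format, of "\<lambda>i. c i + d i"] by simp
    also have "(\<lambda>x. \<Sum>i<m. (c i + d i) * hs i x) =
       (\<lambda>x. (- hs m x + (\<Sum>i<m. c i * hs i x)) + (hs m x + (\<Sum>i<m. d i * hs i x)))"
      by (rule ext) (simp add: distrib_right sum.distrib)
    also have "q \<dots> \<le> q (\<lambda>x. - hs m x + (\<Sum>i<m. c i * hs i x)) + q (\<lambda>x. hs m x + (\<Sum>i<m. d i * hs i x))"
      by (rule sub)
    finally show ?thesis unfolding lo_def up_def by (simp add: distrib_right sum.distrib)
  qed
  define l where "l = Sup (range lo)"
  have bdd: "bdd_above (range lo)" by (rule bdd_aboveI[where M="up (\<lambda>_. 0)"]) (auto simp: key)
  have l1: "lo c \<le> l" for c unfolding l_def by (rule cSup_upper[OF _ bdd]) simp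
  have l2: "l \<le> up d" for d unfolding l_def by (rule cSup_least) (auto simp: key)
  have "hbok q (Suc m) hs (ls(m := l))"
    unfolding hbok_def
  proof
    fix c :: "nat \<Rightarrow> real"
    have L: "(\<Sum>i<Suc m. c i * (ls(m := l)) i) = (\<Sum>i<m. c i * ls i) + c m * l"
      by simp
    have R: "(\<lambda>x. \<Sum>i<Suc m. c i * hs i x) = (\<lambda>x. (\<Sum>i<m. c i * hs i x) + c m * hs m x)"
      by simp
    consider "c m = 0" | "c m > 0" | "c m < 0" by linarith
    then show "(\<Sum>i<Suc m. c i * (ls(m := l)) i) \<le> q (\<lambda>x. \<Sum>i<Suc m. c i * hs i x)"
    proof cases
      case 1
      then show ?thesis unfolding L R using ok unfolding hbok_def by simp
    next
      case 2
      define t where "t = c m"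
      have t: "t > 0" using 2 t_def by simp
      define d where "d i = c i / t" for i
      have "t * l \<le> t * up d" using l2[of d] t by simp
      also have "t * up d = q (\<lambda>x. t * (hs m x + (\<Sum>i<m. d i * hs i x))) - (\<Sum>i<m. c i * ls i)"
        unfolding up_def using t by (simp add: hom right_diff_distrib sum_distrib_left d_def)
      also have "(\<lambda>x. t * (hs m x + (\<Sum>i<m. d i * hs i x))) = (\<lambda>x. (\<Sum>i<m. c i * hs i x) + c m * hs m x)"
        using t by (auto simp: d_def t_def distrib_left sum_distrib_left)
      finally show ?thesis unfolding L R t_def by simp
    next
      case 3
      define t where "t = - c m"
      have t: "t > 0" using 3 t_def by simp
      define d where "d i = c i / t" for i
      have "t * lo d \<le> t * l" using l1[of d] t by simp
      moreover have "t * lo d = (\<Sum>i<m. c i * ls i) - q (\<lambda>x. t * (- hs m x + (\<Sum>i<m. d i * hs i x)))"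
        unfolding lo_def using t hom[of t "\<lambda>x. - hs m x + (\<Sum>i<m. d i * hs i x)"]
        by (simp add: right_diff_distrib sum_distrib_left d_def)
      moreover have "(\<lambda>x. t * (- hs m x + (\<Sum>i<m. d i * hs i x))) = (\<lambda>x. (\<Sum>i<m. c i * hs i x) + c m * hs m x)"
      proof
        fix x
        have "t * (\<Sum>i<m. d i * hs i x) = (\<Sum>i<m. c i * hs i x)"
          unfolding sum_distrib_left d_def using t by (intro sum.cong) auto
        thus "t * (- hs m x + (\<Sum>i<m. d i * hs i x)) = (\<Sum>i<m. c i * hs i x) + c m * hs m x"
          by (simp add: t_def algebra_simps)
      qed
      ultimately show ?thesis unfolding L R using t_def by simp
    qed
  qed
  thus ?thesis by blast
qed



lemma ex_neg: "ex A p (\<lambda>x. - f x) = - ex A p f"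
  unfolding ex_def by (simp add: sum_negf)

lemma ex_const: "ex A p (\<lambda>x. c) = c * sum p A"
  unfolding ex_def by (simp add: sum_distrib_left mult.commute)

lemma ex_ind: "finite A \<Longrightarrow> a \<in> A \<Longrightarrow> ex A p (indicator {a}) = p a"
  unfolding ex_def indicator_def by (simp add: of_bool_def if_distrib sum.delta cong: if_cong)

lemma ex_nind: "finite A \<Longrightarrow> a \<in> A \<Longrightarrow> ex A p (\<lambda>x. - indicator {a} x) = - p a"
  using ex_neg[of A p "indicator {a}"] ex_ind by simp

lemma sum_ind_eq: "finite A \<Longrightarrow> x \<in> A \<Longrightarrow> (\<Sum>a\<in>A. f a * indicator {a} x) = (f x :: real)"
  by (simp add: indicator_def of_bool_def if_distrib sum.delta cong: if_cong)

lemma envelope: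
  fixes P :: "('a \<Rightarrow> real) \<Rightarrow> real"
  assumes coh: "coherent_on A P" and fin: "finite A" and ne: "A \<noteq> {}"
  shows "\<exists>p\<in>cred A P. ex A p g = P g"
proof -
  define N where "N = card A"
  obtain e where e: "bij_betw e {..<N} A"
    using ex_bij_betw_nat_finite[OF fin] unfolding N_def atLeast0LessThan by blast
  define q where "q = upper P"
  define hs where "hs = case_nat g (\<lambda>i. indicator {e i})"
  have sub: "\<And>f g. q (\<lambda>x. f x + g x) \<le> q f + q g" unfolding q_def by (rule upper_add[OF coh])
  have hom: "\<And>c f. c \<ge> 0 \<Longrightarrow> q (\<lambda>x. c * f x) = c * q f" unfolding q_def by (rule upper_hom[OF coh])
  have ind: "\<exists>ls. ls 0 = P g \<and> hbok q (Suc m) hs ls" for m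
  proof (induction m)
    case 0
    have "c * P g \<le> q (\<lambda>x. c * g x)" for c
    proof (cases "c \<ge> 0")
      case True
      then show ?thesis using coh_le_upper[OF coh, of "\<lambda>x. c * g x"] coh_hom[OF coh True, of g]
        unfolding q_def by simp
    next
      case False
      hence "q (\<lambda>x. c * g x) = - P (\<lambda>x. (- c) * g x)" unfolding q_def upper_def by simp
      also have "\<dots> = c * P g" using coh_hom[OF coh, of "- c" g] False by simp
      finally show ?thesis by simp
    qed
    thus ?case unfolding hbok_def hs_def by (intro exI[of _ "\<lambda>_. P g"]) simp
  next
    case (Suc m)
    then obtain ls where ls: "ls 0 = P g" "hbok q (Suc m) hs ls" by blast
    obtain l where "hbok q (Suc (Suc m)) hs (ls(Suc m := l))" using hb_step[OF sub hom ls(2)] by blast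
    moreover have "(ls(Suc m := l)) 0 = P g" using ls(1) by simp
    ultimately show ?case by blast
  qed
  obtain ls where ls: "ls 0 = P g" "hbok q (Suc N) hs ls" using ind by blast
  define p where "p a = ls (Suc (inv_into {..<N} e a))" for a
  have pe: "p (e i) = ls (Suc i)" if "i < N" for i
    unfolding p_def using bij_betw_inv_into_left[OF e] that by simp
  have main: "r * P g + ex A p f \<le> q (\<lambda>x. r * g x + f x)" for r f
  proof -
    define c where "c = case_nat r (\<lambda>i. f (e i))"
    have "(\<Sum>i<Suc N. c i * ls i) \<le> q (\<lambda>x. \<Sum>i<Suc N. c i * hs i x)"
      using ls(2) unfolding hbok_def by blast
    also have "(\<Sum>i<Suc N. c i * ls i) = r * P g + (\<Sum>i<N. f (e i) * p (e i))"
      unfolding sum.lessThan_Suc_shift c_def using ls(1) pe by simp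
    also have "(\<Sum>i<N. f (e i) * p (e i)) = ex A p f"
      unfolding ex_def using sum.reindex_bij_betw[OF e, of "\<lambda>a. p a * f a"] by (simp add: mult.commute)
    also have "q (\<lambda>x. \<Sum>i<Suc N. c i * hs i x) = q (\<lambda>x. r * g x + f x)"
      unfolding q_def
    proof (rule upper_cong[OF coh fin ne])
      fix x assume x: "x \<in> A"
      have "(\<Sum>i<Suc N. c i * hs i x) = r * g x + (\<Sum>i<N. f (e i) * indicator {e i} x)"
        unfolding sum.lessThan_Suc_shift c_def hs_def by simp
      also have "(\<Sum>i<N. f (e i) * indicator {e i} x) = (\<Sum>a\<in>A. f a * indicator {a} x)"
        using sum.reindex_bij_betw[OF e, of "\<lambda>a. f a * indicator {a} x"] by simp
      also have "\<dots> = f x" by (rule sum_ind_eq[OF fin x])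
      finally show "(\<Sum>i<Suc N. c i * hs i x) = r * g x + f x" .
    qed
    finally show ?thesis .
  qed
  have q0: "q (\<lambda>x. 0) = 0" unfolding q_def upper_def using coh_zero[OF coh] by simp
  have le: "ex A p f \<le> q f" for f using main[of 0 f] by simp
  have dom: "P f \<le> ex A p f" for f
    using le[of "\<lambda>x. - f x"] unfolding q_def upper_def ex_neg by simp
  have pos: "0 \<le> p a" if "a \<in> A" for a
  proof -
    have "Min (indicator {a} ` A) \<ge> (0::real)" using fin ne by (simp add: Min_ge_iff)
    thus ?thesis using dom[of "indicator {a}"] coh_Min[OF coh, of "indicator {a}"] ex_ind[OF fin that] by simp
  qed
  have s1: "sum p A = 1"
    using dom[of "\<lambda>x. 1"] dom[of "\<lambda>x. -1"] coh_const[OF coh ne, of 1] coh_const[OF coh ne, of "-1"]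
    unfolding ex_const by simp
  have "P g - ex A p g \<le> 0" using main[of 1 "\<lambda>x. - g x"] q0 unfolding ex_neg by simp
  moreover have "- P g + ex A p g \<le> 0" using main[of "-1" g] q0 by simp
  ultimately have "ex A p g = P g" by simp
  moreover have "p \<in> cred A P" unfolding cred_def using pos s1 dom by blast
  ultimately show ?thesis by blast
qed



lemma Inf_scale:
  fixes c :: real
  assumes "c \<ge> 0" "Phi \<noteq> {}" "bdd_below (F ` Phi)"
  shows "Inf ((\<lambda>L. c * F L) ` Phi) = c * Inf (F ` Phi)"
proof (cases "c = 0")
  case True
  then have "(\<lambda>L. c * F L) ` Phi = {0}" using assms(2) by auto
  then show ?thesis using True by simp
next
  case False
  hence c: "c > 0" using assms(1) by simp
  obtain m where m: "\<And>L. L \<in> Phi \<Longrightarrow> m \<le> F L" using assms(3) unfolding bdd_below_def by auto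
  have bdd2: "bdd_below ((\<lambda>L. c * F L) ` Phi)"
    by (rule bdd_belowI[where m="c * m"]) (use m c in auto)
  have "c * Inf (F ` Phi) \<le> Inf ((\<lambda>L. c * F L) ` Phi)"
    by (rule cInf_greatest) (use assms(2) cInf_lower[OF _ assms(3)] c in auto)
  moreover have "Inf ((\<lambda>L. c * F L) ` Phi) / c \<le> Inf (F ` Phi)"
  proof (rule cInf_greatest)
    show "F ` Phi \<noteq> {}" using assms(2) by simp
    fix x assume "x \<in> F ` Phi"
    then obtain L where L: "L \<in> Phi" "x = F L" by auto
    have "Inf ((\<lambda>L. c * F L) ` Phi) \<le> c * F L" by (rule cInf_lower[OF _ bdd2]) (use L in auto)
    thus "Inf ((\<lambda>L. c * F L) ` Phi) / c \<le> x" using c L by (simp add: divide_le_eq mult.commute)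
  qed
  hence "Inf ((\<lambda>L. c * F L) ` Phi) \<le> c * Inf (F ` Phi)" using c by (simp add: divide_le_eq mult.commute)
  ultimately show ?thesis by simp
qed

lemma inf_bdd:
  assumes "\<And>L. L \<in> Phi \<Longrightarrow> coherent_on C L"
  shows "bdd_below ((\<lambda>L. L f) ` Phi)"
  by (rule bdd_belowI[where m="Min (f ` C)"]) (use assms coh_Min in blast)

lemma inf_coh:
  assumes ne: "Phi \<noteq> {}" and coh: "\<And>L. L \<in> Phi \<Longrightarrow> coherent_on C L"
  shows "coherent_on C (\<lambda>f. Inf ((\<lambda>L. L f) ` Phi))"
  unfolding coherent_on_def
proof (intro conjI allI impI)
  fix f
  show "Min (f ` C) \<le> Inf ((\<lambda>L. L f) ` Phi)"
    by (rule cInf_greatest) (use ne coh coh_Min in auto)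
next
  fix c :: real and f assume c: "c \<ge> 0"
  have "(\<lambda>L. L (\<lambda>x. c * f x)) ` Phi = (\<lambda>L. c * L f) ` Phi"
    using coh_hom[OF coh c] by (auto simp: image_def)
  thus "Inf ((\<lambda>L. L (\<lambda>x. c * f x)) ` Phi) = c * Inf ((\<lambda>L. L f) ` Phi)"
    using Inf_scale[OF c ne inf_bdd[OF coh]] by simp
next
  fix f g
  show "Inf ((\<lambda>L. L f) ` Phi) + Inf ((\<lambda>L. L g) ` Phi) \<le> Inf ((\<lambda>L. L (\<lambda>x. f x + g x)) ` Phi)"
  proof (rule cInf_greatest)
    show "(\<lambda>L. L (\<lambda>x. f x + g x)) ` Phi \<noteq> {}" using ne by simp
    fix y assume "y \<in> (\<lambda>L. L (\<lambda>x. f x + g x)) ` Phi"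
    then obtain L where L: "L \<in> Phi" "y = L (\<lambda>x. f x + g x)" by auto
    have "Inf ((\<lambda>L. L f) ` Phi) \<le> L f" by (rule cInf_lower[OF _ inf_bdd[OF coh]]) (use L in auto)
    moreover have "Inf ((\<lambda>L. L g) ` Phi) \<le> L g" by (rule cInf_lower[OF _ inf_bdd[OF coh]]) (use L in auto)
    moreover have "L f + L g \<le> L (\<lambda>x. f x + g x)" using coh_add[OF coh[OF L(1)]] .
    ultimately show "Inf ((\<lambda>L. L f) ` Phi) + Inf ((\<lambda>L. L g) ` Phi) \<le> y" using L by simp
  qed
qed

lemma inf_le:
  assumes "L \<in> Phi" "\<And>L. L \<in> Phi \<Longrightarrow> coherent_on C L"
  shows "Inf ((\<lambda>L. L f) ` Phi) \<le> L f"
  by (rule cInf_lower[OF _ inf_bdd[OF assms(2)]]) (use assms in auto)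

lemma ex_coh:
  assumes fin: "finite C" and pos: "\<And>x. x \<in> C \<Longrightarrow> 0 \<le> w x" and s: "sum w C = 1"
  shows "coherent_on C (ex C w)"
  unfolding coherent_on_def
proof (intro conjI allI impI)
  fix f
  show "Min (f ` C) \<le> ex C w f"
  proof (cases "C = {}")
    case True then show ?thesis using s by simp
  next
    case False
    have "(\<Sum>x\<in>C. w x * Min (f ` C)) \<le> (\<Sum>x\<in>C. w x * f x)"
      by (rule sum_mono) (use pos fin in \<open>auto intro: mult_left_mono\<close>)
    thus ?thesis unfolding ex_def using s by (simp add: sum_distrib_right[symmetric])
  qed
next
  fix c :: real and f
  show "ex C w (\<lambda>x. c * f x) = c * ex C w f" unfolding ex_def by (simp add: sum_distrib_left algebra_simps)
next
  fix f g
  show "ex C w f + ex C w g \<le> ex C w (\<lambda>x. f x + g x)" unfolding ex_def by (simp add: sum.distrib algebra_simps)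
qed

definition ex2 :: "'a set \<Rightarrow> 'b set \<Rightarrow> ('a \<Rightarrow> real) \<Rightarrow> ('b \<Rightarrow> real) \<Rightarrow> ('a \<times> 'b \<Rightarrow> real) \<Rightarrow> real" where
  "ex2 A B p1 p2 = ex (A \<times> B) (\<lambda>w. p1 (fst w) * p2 (snd w))"

definition SPhi where
  "SPhi A B P1 P2 = {ex2 A B p1 p2 | p1 p2. p1 \<in> cred A P1 \<and> p2 \<in> cred B P2}"

definition sprod where
  "sprod A B P1 P2 f = Inf ((\<lambda>L. L f) ` SPhi A B P1 P2)"

lemma sum_times_split: "(\<Sum>w\<in>A \<times> B. F w) = (\<Sum>a\<in>A. \<Sum>b\<in>B. F (a, b))"
  by (subst sum.cartesian_product) (simp add: case_prod_beta')

lemma ex2_split1: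
   "ex2 A B p1 p2 f = (\<Sum>a\<in>A. p1 a * (\<Sum>b\<in>B. p2 b * f (a, b)))"
  unfolding ex2_def ex_def sum_times_split by (simp add: sum_distrib_left mult.assoc)

lemma ex2_split2:
   "ex2 A B p1 p2 f = (\<Sum>b\<in>B. p2 b * (\<Sum>a\<in>A. p1 a * f (a, b)))"
  unfolding ex2_split1 by (simp add: sum_distrib_left mult.left_commute) (rule sum.swap)

lemma ex2_marg1: "sum p2 B = 1 \<Longrightarrow> ex2 A B p1 p2 (\<lambda>(a, b). g a) = ex A p1 g"
proof -
  assume s: "sum p2 B = 1"
  have inner: "(\<Sum>b\<in>B. p2 b * g a) = g a" for a
    using sum_distrib_right[of p2 B "g a"] s by simp
  show ?thesis unfolding ex2_split1 ex_def by (simp add: inner)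
qed

lemma ex2_marg2: "sum p1 A = 1 \<Longrightarrow> ex2 A B p1 p2 (\<lambda>(a, b). h b) = ex B p2 h"
proof -
  assume s: "sum p1 A = 1"
  have inner: "(\<Sum>a\<in>A. p1 a * h b) = h b" for b
    using sum_distrib_right[of p1 A "h b"] s by simp
  show ?thesis unfolding ex2_split2 ex_def by (simp add: inner)
qed

lemma cred_sum: "p \<in> cred A P \<Longrightarrow> sum p A = 1" unfolding cred_def by blast
lemma cred_pos: "p \<in> cred A P \<Longrightarrow> a \<in> A \<Longrightarrow> 0 \<le> p a" unfolding cred_def by blast
lemma cred_dom: "p \<in> cred A P \<Longrightarrow> P f \<le> ex A p f" unfolding cred_def by blast

lemma ex2_coh:
  assumes "finite A" "finite B" "p1 \<in> cred A P1" "p2 \<in> cred B P2"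
  shows "coherent_on (A \<times> B) (ex2 A B p1 p2)"
  unfolding ex2_def
proof (rule ex_coh)
  show "finite (A \<times> B)" using assms by simp
  show "0 \<le> p1 (fst x) * p2 (snd x)" if "x \<in> A \<times> B" for x
    using that cred_pos[OF assms(3)] cred_pos[OF assms(4)] by auto
  have "(\<Sum>x\<in>A \<times> B. p1 (fst x) * p2 (snd x)) = ex2 A B p1 p2 (\<lambda>_. 1)" unfolding ex2_def ex_def by simp
  also have "\<dots> = 1" unfolding ex2_split1 using cred_sum[OF assms(3)] cred_sum[OF assms(4)]
    by (simp add: sum_distrib_right[symmetric])
  finally show "(\<Sum>x\<in>A \<times> B. p1 (fst x) * p2 (snd x)) = 1" .
qed

lemma cred_ne: "coherent_on A P \<Longrightarrow> finite A \<Longrightarrow> A \<noteq> {} \<Longrightarrow> cred A P \<noteq> {}"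
  using envelope by blast

lemma SPhi_coh: "finite A \<Longrightarrow> finite B \<Longrightarrow> L \<in> SPhi A B P1 P2 \<Longrightarrow> coherent_on (A \<times> B) L"
  unfolding SPhi_def using ex2_coh by blast

lemma SPhi_ne: "coherent_on A P1 \<Longrightarrow> finite A \<Longrightarrow> A \<noteq> {} \<Longrightarrow>
  coherent_on B P2 \<Longrightarrow> finite B \<Longrightarrow> B \<noteq> {} \<Longrightarrow> SPhi A B P1 P2 \<noteq> {}"
  unfolding SPhi_def using cred_ne[of A P1] cred_ne[of B P2] by blast

lemma sprod_coh:
  assumes "coherent_on A P1" "finite A" "A \<noteq> {}" "coherent_on B P2" "finite B" "B \<noteq> {}"
  shows "coherent_on (A \<times> B) (sprod A B P1 P2)"
  unfolding sprod_def[abs_def]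
  by (rule inf_coh[OF SPhi_ne[OF assms]]) (use SPhi_coh assms in blast)

lemma sprod_le:
  assumes "finite A" "finite B" "p1 \<in> cred A P1" "p2 \<in> cred B P2"
  shows "sprod A B P1 P2 f \<le> ex2 A B p1 p2 f"
proof -
  have mem: "ex2 A B p1 p2 \<in> SPhi A B P1 P2" unfolding SPhi_def using assms by blast
  show ?thesis unfolding sprod_def by (rule inf_le[OF mem]) (rule SPhi_coh[OF assms(1,2)])
qed

lemma sprod_marg1:
  assumes "coherent_on A P1" "finite A" "A \<noteq> {}" "coherent_on B P2" "finite B" "B \<noteq> {}"
  shows "sprod A B P1 P2 (\<lambda>(a, b). g a) = P1 g"
proof (rule antisym)
  obtain p1 where p1: "p1 \<in> cred A P1" "ex A p1 g = P1 g" using envelope[OF assms(1-3)] by blast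
  obtain p2 where p2: "p2 \<in> cred B P2" using cred_ne[OF assms(4-6)] by blast
  have "ex2 A B p1 p2 (\<lambda>(a, b). g a) = ex A p1 g" by (rule ex2_marg1[OF cred_sum[OF p2]])
  thus "sprod A B P1 P2 (\<lambda>(a, b). g a) \<le> P1 g" using sprod_le[OF assms(2,5) p1(1) p2, of "\<lambda>(a, b). g a"] p1(2) by simp
next
  show "P1 g \<le> sprod A B P1 P2 (\<lambda>(a, b). g a)"
    unfolding sprod_def
  proof (rule cInf_greatest)
    show "(\<lambda>L. L (\<lambda>(a, b). g a)) ` SPhi A B P1 P2 \<noteq> {}" using SPhi_ne[OF assms] by simp
    fix y assume "y \<in> (\<lambda>L. L (\<lambda>(a, b). g a)) ` SPhi A B P1 P2"
    then obtain p1 p2 where pp: "p1 \<in> cred A P1" "p2 \<in> cred B P2" "y = ex2 A B p1 p2 (\<lambda>(a, b). g a)"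
      unfolding SPhi_def by auto
    have "ex2 A B p1 p2 (\<lambda>(a, b). g a) = ex A p1 g" by (rule ex2_marg1[OF cred_sum[OF pp(2)]])
    thus "P1 g \<le> y" using cred_dom[OF pp(1)] pp(3) by simp
  qed
qed

lemma sprod_marg2:
  assumes "coherent_on A P1" "finite A" "A \<noteq> {}" "coherent_on B P2" "finite B" "B \<noteq> {}"
  shows "sprod A B P1 P2 (\<lambda>(a, b). h b) = P2 h"
proof (rule antisym)
  obtain p2 where p2: "p2 \<in> cred B P2" "ex B p2 h = P2 h" using envelope[OF assms(4-6)] by blast
  obtain p1 where p1: "p1 \<in> cred A P1" using cred_ne[OF assms(1-3)] by blast
  have "ex2 A B p1 p2 (\<lambda>(a, b). h b) = ex B p2 h" by (rule ex2_marg2[OF cred_sum[OF p1]])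
  thus "sprod A B P1 P2 (\<lambda>(a, b). h b) \<le> P2 h" using sprod_le[OF assms(2,5) p1 p2(1), of "\<lambda>(a, b). h b"] p2(2) by simp
next
  show "P2 h \<le> sprod A B P1 P2 (\<lambda>(a, b). h b)"
    unfolding sprod_def
  proof (rule cInf_greatest)
    show "(\<lambda>L. L (\<lambda>(a, b). h b)) ` SPhi A B P1 P2 \<noteq> {}" using SPhi_ne[OF assms] by simp
    fix y assume "y \<in> (\<lambda>L. L (\<lambda>(a, b). h b)) ` SPhi A B P1 P2"
    then obtain p1 p2 where pp: "p1 \<in> cred A P1" "p2 \<in> cred B P2" "y = ex2 A B p1 p2 (\<lambda>(a, b). h b)"
      unfolding SPhi_def by auto
    have "ex2 A B p1 p2 (\<lambda>(a, b). h b) = ex B p2 h" by (rule ex2_marg2[OF cred_sum[OF pp(1)]])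
    thus "P2 h \<le> y" using cred_dom[OF pp(2)] pp(3) by simp
  qed
qed



lemma cred_posit:
  assumes "coherent_on A P" "finite A" "A \<noteq> {}" "a \<in> A" "upper P (indicator {a}) > 0"
  shows "\<exists>p\<in>cred A P. p a > 0"
proof -
  obtain p where p: "p \<in> cred A P" "ex A p (\<lambda>x. - indicator {a} x) = P (\<lambda>x. - indicator {a} x)"
    using envelope[OF assms(1-3)] by blast
  have "P (\<lambda>x. - indicator {a} x) = - upper P (indicator {a})" unfolding upper_def by simp
  hence "p a > 0" using p ex_nind[OF assms(2,4), of p] assms(5) by simp
  thus ?thesis using p(1) by blast
qed

lemma cred_some_pos:
  assumes "p \<in> cred A P" "finite A"
  shows "\<exists>a\<in>A. p a > 0"
proof (rule ccontr)
  assume "\<not> ?thesis"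
  hence "\<forall>a\<in>A. p a \<le> 0" by auto
  hence "sum p A \<le> 0" by (simp add: sum_nonpos)
  thus False using cred_sum[OF assms(1)] by simp
qed

lemma sum_restrict_W:
  assumes "finite (A \<times> B)" "W \<subseteq> A \<times> B"
  shows "(\<Sum>w\<in>W. F w) = (\<Sum>a\<in>A. \<Sum>b\<in>B. if (a, b) \<in> W then F (a, b) else (0::real))"
proof -
  have "W = (A \<times> B) \<inter> W" using assms(2) by blast
  hence "(\<Sum>w\<in>W. F w) = (\<Sum>w\<in>A \<times> B. if w \<in> W then F w else 0)"
    using sum.inter_restrict[OF assms(1), of F W] by simp
  thus ?thesis unfolding sum_times_split .
qed

locale spsetup =
  fixes A :: "'a set" and B :: "'b set" and P1 and P2
  assumes c1: "coherent_on A P1" and f1: "finite A" and n1: "A \<noteq> {}"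
    and c2: "coherent_on B P2" and f2: "finite B" and n2: "B \<noteq> {}"
    and u1: "\<And>a. a \<in> A \<Longrightarrow> upper P1 (indicator {a}) > 0"
    and u2: "\<And>b. b \<in> B \<Longrightarrow> upper P2 (indicator {b}) > 0"
begin

abbreviation "SP \<equiv> sprod A B P1 P2"

lemma fAB: "finite (A \<times> B)" using f1 f2 by simp
lemma nAB: "A \<times> B \<noteq> {}" using n1 n2 by simp
lemma cSP: "coherent_on (A \<times> B) SP" using sprod_coh[OF c1 f1 n1 c2 f2 n2] .

lemma pi_sum:
  assumes "p1 \<in> cred A P1" "p2 \<in> cred B P2"
  shows "(\<Sum>w\<in>A \<times> B. p1 (fst w) * p2 (snd w) * F w) = ex2 A B p1 p2 F"
  unfolding ex2_def ex_def ..

lemma pi_one: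
  assumes "p1 \<in> cred A P1" "p2 \<in> cred B P2"
  shows "(\<Sum>w\<in>A \<times> B. p1 (fst w) * p2 (snd w)) = 1"
  using ex2_marg1[OF cred_sum[OF assms(2)], of A p1 "\<lambda>_. 1"] cred_sum[OF assms(1)]
  unfolding ex2_def ex_def ex_const by simp

lemma K0:
  assumes p1: "p1 \<in> cred A P1" and p2: "p2 \<in> cred B P2"
    and W: "S0 A B f0 \<subseteq> W" "W \<subseteq> A \<times> B"
  shows "(\<Sum>w\<in>W. p1 (fst w) * p2 (snd w) * G0 SP f0 w) \<ge> 0"
proof (cases "\<exists>w\<in>A \<times> B. f0 w \<noteq> 0")
  case True
  hence "W = A \<times> B" using W unfolding S0_def by auto
  hence "(\<Sum>w\<in>W. p1 (fst w) * p2 (snd w) * G0 SP f0 w)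
      = (\<Sum>w\<in>A \<times> B. p1 (fst w) * p2 (snd w) * f0 w) - SP f0 * (\<Sum>w\<in>A \<times> B. p1 (fst w) * p2 (snd w))"
    unfolding G0_def by (simp add: right_diff_distrib sum_subtractf sum_distrib_left mult.commute)
  also have "\<dots> = ex2 A B p1 p2 f0 - SP f0" unfolding pi_sum[OF p1 p2] pi_one[OF p1 p2] by simp
  also have "\<dots> \<ge> 0" using sprod_le[OF f1 f2 p1 p2, of f0] by simp
  finally show ?thesis .
next
  case False
  hence "SP f0 = SP (\<lambda>_. 0)" by (intro coh_cong[OF cSP fAB nAB]) auto
  hence "SP f0 = 0" using coh_zero[OF cSP] by simp
  hence "\<forall>w\<in>W. G0 SP f0 w = 0" using False W unfolding G0_def by auto
  thus ?thesis by simp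
qed

lemma K1:
  assumes p1: "p1 \<in> cred A P1" and p2: "p2 \<in> cred B P2"
    and W: "S1 A B f1 \<subseteq> W" "W \<subseteq> A \<times> B"
  shows "(\<Sum>w\<in>W. p1 (fst w) * p2 (snd w) * G1 P1 f1 w) \<ge> 0"
proof -
  have "(\<Sum>w\<in>W. p1 (fst w) * p2 (snd w) * G1 P1 f1 w) =
     (\<Sum>a\<in>A. \<Sum>b\<in>B. if (a, b) \<in> W then p1 a * p2 b * G1 P1 f1 (a, b) else 0)"
    unfolding sum_restrict_W[OF fAB W(2)] by (simp only: fst_conv snd_conv)
  also have "\<dots> = (\<Sum>b\<in>B. p2 b * (\<Sum>a\<in>A. p1 a * (if (a, b) \<in> W then G1 P1 f1 (a, b) else 0)))"
    by (subst sum.swap) (auto simp: sum_distrib_left intro!: sum.cong)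
  also have "\<dots> \<ge> 0"
  proof (rule sum_nonneg)
    fix b assume b: "b \<in> B"
    have "(\<Sum>a\<in>A. p1 a * (if (a, b) \<in> W then G1 P1 f1 (a, b) else 0)) \<ge> 0"
    proof (cases "\<exists>a'\<in>A. f1 (a', b) \<noteq> 0")
      case True
      hence inW: "(a, b) \<in> W" if "a \<in> A" for a using W b that unfolding S1_def by auto
      have "(\<Sum>a\<in>A. p1 a * (if (a, b) \<in> W then G1 P1 f1 (a, b) else 0))
          = (\<Sum>a\<in>A. p1 a * f1 (a, b)) - P1 (\<lambda>a'. f1 (a', b)) * sum p1 A"
        using inW unfolding G1_def by (simp add: right_diff_distrib sum_subtractf sum_distrib_right mult.commute)
      also have "\<dots> = ex A p1 (\<lambda>a. f1 (a, b)) - P1 (\<lambda>a'. f1 (a', b))"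
        unfolding ex_def cred_sum[OF p1] by simp
      also have "\<dots> \<ge> 0" using cred_dom[OF p1, of "\<lambda>a. f1 (a, b)"] by simp
      finally show ?thesis .
    next
      case False
      hence "P1 (\<lambda>a'. f1 (a', b)) = P1 (\<lambda>_. 0)" by (intro coh_cong[OF c1 f1 n1]) auto
      hence "P1 (\<lambda>a'. f1 (a', b)) = 0" using coh_zero[OF c1] by simp
      hence "\<forall>a\<in>A. G1 P1 f1 (a, b) = 0" using False unfolding G1_def by auto
      thus ?thesis by (intro sum_nonneg) simp
    qed
    thus "0 \<le> p2 b * (\<Sum>a\<in>A. p1 a * (if (a, b) \<in> W then G1 P1 f1 (a, b) else 0))"
      using cred_pos[OF p2 b] by simp
  qed
  finally show ?thesis .
qed

lemma K2:
  assumes p1: "p1 \<in> cred A P1" and p2: "p2 \<in> cred B P2"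
    and W: "S2 A B f2 \<subseteq> W" "W \<subseteq> A \<times> B"
  shows "(\<Sum>w\<in>W. p1 (fst w) * p2 (snd w) * G2 P2 f2 w) \<ge> 0"
proof -
  have "(\<Sum>w\<in>W. p1 (fst w) * p2 (snd w) * G2 P2 f2 w) =
     (\<Sum>a\<in>A. \<Sum>b\<in>B. if (a, b) \<in> W then p1 a * p2 b * G2 P2 f2 (a, b) else 0)"
    unfolding sum_restrict_W[OF fAB W(2)] by (simp only: fst_conv snd_conv)
  also have "\<dots> = (\<Sum>a\<in>A. p1 a * (\<Sum>b\<in>B. p2 b * (if (a, b) \<in> W then G2 P2 f2 (a, b) else 0)))"
    by (simp add: sum_distrib_left if_distrib mult.assoc cong: if_cong)
  also have "\<dots> \<ge> 0"
  proof (rule sum_nonneg)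
    fix a assume a: "a \<in> A"
    have "(\<Sum>b\<in>B. p2 b * (if (a, b) \<in> W then G2 P2 f2 (a, b) else 0)) \<ge> 0"
    proof (cases "\<exists>b'\<in>B. f2 (a, b') \<noteq> 0")
      case True
      hence inW: "(a, b) \<in> W" if "b \<in> B" for b using W a that unfolding S2_def by auto
      have "(\<Sum>b\<in>B. p2 b * (if (a, b) \<in> W then G2 P2 f2 (a, b) else 0))
          = (\<Sum>b\<in>B. p2 b * f2 (a, b)) - P2 (\<lambda>b'. f2 (a, b')) * sum p2 B"
        using inW unfolding G2_def by (simp add: right_diff_distrib sum_subtractf sum_distrib_right mult.commute)
      also have "\<dots> = ex B p2 (\<lambda>b. f2 (a, b)) - P2 (\<lambda>b'. f2 (a, b'))"
        unfolding ex_def cred_sum[OF p2] by simp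
      also have "\<dots> \<ge> 0" using cred_dom[OF p2, of "\<lambda>b. f2 (a, b)"] by simp
      finally show ?thesis .
    next
      case False
      hence "P2 (\<lambda>b'. f2 (a, b')) = P2 (\<lambda>_. 0)" by (intro coh_cong[OF c2 f2 n2]) auto
      hence "P2 (\<lambda>b'. f2 (a, b')) = 0" using coh_zero[OF c2] by simp
      hence "\<forall>b\<in>B. G2 P2 f2 (a, b) = 0" using False unfolding G2_def by auto
      thus ?thesis by (intro sum_nonneg) simp
    qed
    thus "0 \<le> p1 a * (\<Sum>b\<in>B. p2 b * (if (a, b) \<in> W then G2 P2 f2 (a, b) else 0))"
      using cred_pos[OF p1 a] by simp
  qed
  finally show ?thesis .
qed

lemma KEY:
  assumes p1: "p1 \<in> cred A P1" and p2: "p2 \<in> cred B P2"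
    and W: "S0 A B f0 \<union> S1 A B f1 \<union> S2 A B f2 \<subseteq> W" "W \<subseteq> A \<times> B"
  shows "(\<Sum>w\<in>W. p1 (fst w) * p2 (snd w) * (G0 SP f0 w + G1 P1 f1 w + G2 P2 f2 w)) \<ge> 0"
  using K0[OF p1 p2 _ W(2), of f0] K1[OF p1 p2 _ W(2), of f1] K2[OF p1 p2 _ W(2), of f2] W(1)
  by (simp add: distrib_left sum.distrib)

end



lemma sum_neg_strict:
  fixes X pi :: "'w \<Rightarrow> real"
  assumes "finite W" "w0 \<in> W" "\<And>w. w \<in> W \<Longrightarrow> 0 \<le> pi w" "pi w0 > 0" "\<And>w. w \<in> W \<Longrightarrow> X w < 0"
  shows "(\<Sum>w\<in>W. pi w * X w) < 0"
proof -
  have "(\<Sum>w\<in>W. pi w * X w) = pi w0 * X w0 + (\<Sum>w\<in>W - {w0}. pi w * X w)"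
    using sum.remove[OF assms(1,2)] by simp
  moreover have "(\<Sum>w\<in>W - {w0}. pi w * X w) \<le> 0"
    by (rule sum_nonpos) (use assms(3,5) in \<open>auto intro: mult_nonneg_nonpos less_imp_le\<close>)
  moreover have "pi w0 * X w0 < 0" using assms(2,4,5) by (simp add: mult_pos_neg)
  ultimately show ?thesis by simp
qed

lemma sum_ind_restrict:
  fixes F :: "'w \<Rightarrow> real"
  assumes "finite W" "T \<subseteq> W"
  shows "(\<Sum>w\<in>W. G w * (indicator T w * F w)) = (\<Sum>w\<in>T. G w * F w)"
proof -
  have "(\<Sum>w\<in>W. G w * (indicator T w * F w)) = (\<Sum>w\<in>W. if w \<in> T then G w * F w else 0)"
    by (rule sum.cong) (auto simp: indicator_def)
  also have "\<dots> = (\<Sum>w\<in>W \<inter> T. G w * F w)" using sum.inter_restrict[OF assms(1), of "\<lambda>w. G w * F w" T] by simp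
  also have "W \<inter> T = T" using assms(2) by blast
  finally show ?thesis .
qed

context spsetup begin

lemma U_sub: "S0 A B f0 \<union> S1 A B f1 \<union> S2 A B f2 \<subseteq> A \<times> B"
  unfolding S0_def S1_def S2_def by auto

lemma pi_nonneg: "p1 \<in> cred A P1 \<Longrightarrow> p2 \<in> cred B P2 \<Longrightarrow> w \<in> A \<times> B \<Longrightarrow> 0 \<le> p1 (fst w) * p2 (snd w)"
  using cred_pos by (metis SigmaE fst_conv mult_nonneg_nonneg snd_conv)

lemma C1:
  "0 \<le> Max ((\<lambda>w. (G0 SP f0 w + G1 P1 f1 w + G2 P2 f2 w) - (g w - SP g))
          ` (A \<times> B \<union> (S0 A B f0 \<union> S1 A B f1 \<union> S2 A B f2)))"
proof (rule ccontr)
  define X where "X w = (G0 SP f0 w + G1 P1 f1 w + G2 P2 f2 w) - (g w - SP g)" for w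
  have AB: "A \<times> B \<union> (S0 A B f0 \<union> S1 A B f1 \<union> S2 A B f2) = A \<times> B" using U_sub by blast
  assume "\<not> ?thesis"
  hence m0: "Max (X ` (A \<times> B)) < 0" unfolding X_def AB by simp
  define m where "m = Max (X ` (A \<times> B))"
  have Xm: "X w \<le> m" if "w \<in> A \<times> B" for w unfolding m_def using fAB that by simp
  have "Inf ((\<lambda>L. L g) ` SPhi A B P1 P2) < SP g - m" using m0 unfolding m_def sprod_def by simp
  then obtain L where L: "L \<in> SPhi A B P1 P2" "L g < SP g - m"
    using cInf_lessD[of "(\<lambda>L. L g) ` SPhi A B P1 P2"] SPhi_ne[OF c1 f1 n1 c2 f2 n2] by blast
  then obtain p1 p2 where p: "p1 \<in> cred A P1" "p2 \<in> cred B P2" "L = ex2 A B p1 p2"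
    unfolding SPhi_def by blast
  have "(\<Sum>w\<in>A \<times> B. p1 (fst w) * p2 (snd w) * X w) =
      (\<Sum>w\<in>A \<times> B. p1 (fst w) * p2 (snd w) * (G0 SP f0 w + G1 P1 f1 w + G2 P2 f2 w))
      - (\<Sum>w\<in>A \<times> B. p1 (fst w) * p2 (snd w) * g w) + SP g * (\<Sum>w\<in>A \<times> B. p1 (fst w) * p2 (snd w))"
    unfolding X_def by (simp add: algebra_simps sum_subtractf sum.distrib sum_distrib_left)
  also have "\<dots> \<ge> 0 - L g + SP g"
    using KEY[OF p(1,2) U_sub order_refl] unfolding pi_sum[OF p(1,2)] pi_one[OF p(1,2)] p(3) by simp
  finally have lo: "(\<Sum>w\<in>A \<times> B. p1 (fst w) * p2 (snd w) * X w) > m" using L(2) by simp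
  have "(\<Sum>w\<in>A \<times> B. p1 (fst w) * p2 (snd w) * X w) \<le> (\<Sum>w\<in>A \<times> B. p1 (fst w) * p2 (snd w) * m)"
    by (rule sum_mono) (use Xm pi_nonneg[OF p(1,2)] in \<open>auto intro: mult_left_mono\<close>)
  also have "\<dots> = m" using pi_one[OF p(1,2)] by (simp add: sum_distrib_right[symmetric])
  finally show False using lo by simp
qed

lemma C2:
  assumes b: "b \<in> B"
  shows "0 \<le> Max ((\<lambda>w. (G0 SP f0 w + G1 P1 f1 w + G2 P2 f2 w)
             - indicator (A \<times> {b}) w * (g w - P1 (\<lambda>a. g (a, b))))
          ` (A \<times> {b} \<union> (S0 A B f0 \<union> S1 A B f1 \<union> S2 A B f2)))"
proof (rule ccontr)
  define W where "W = A \<times> {b} \<union> (S0 A B f0 \<union> S1 A B f1 \<union> S2 A B f2)"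
  define c where "c = P1 (\<lambda>a. g (a, b))"
  define D where "D w = G0 SP f0 w + G1 P1 f1 w + G2 P2 f2 w" for w
  define X where "X w = D w - indicator (A \<times> {b}) w * (g w - c)" for w
  have WAB: "W \<subseteq> A \<times> B" unfolding W_def using U_sub b by blast
  have fW: "finite W" using finite_subset[OF WAB fAB] .
  have neW: "W \<noteq> {}" unfolding W_def using n1 by blast
  assume "\<not> ?thesis"
  hence "Max (X ` W) < 0" unfolding X_def D_def W_def c_def by simp
  hence Xneg: "X w < 0" if "w \<in> W" for w using fW neW that by (simp add: Max_less_iff)
  obtain p1 where p1: "p1 \<in> cred A P1" "ex A p1 (\<lambda>a. g (a, b)) = c"
    using envelope[OF c1 f1 n1] unfolding c_def by blast
  obtain p2 where p2: "p2 \<in> cred B P2" "p2 b > 0" using cred_posit[OF c2 f2 n2 b u2[OF b]] by blast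
  obtain a0 where a0: "a0 \<in> A" "p1 a0 > 0" using cred_some_pos[OF p1(1) f1] by blast
  have "(\<Sum>w\<in>W. p1 (fst w) * p2 (snd w) * X w) < 0"
    by (rule sum_neg_strict[OF fW, of "(a0, b)"])
       (use a0 p2 Xneg WAB pi_nonneg[OF p1(1) p2(1)] W_def in auto)
  moreover have "(\<Sum>w\<in>W. p1 (fst w) * p2 (snd w) * X w) =
     (\<Sum>w\<in>W. p1 (fst w) * p2 (snd w) * D w) -
     (\<Sum>w\<in>W. p1 (fst w) * p2 (snd w) * (indicator (A \<times> {b}) w * (g w - c)))"
    unfolding X_def by (simp add: right_diff_distrib sum_subtractf)
  moreover have "(\<Sum>w\<in>W. p1 (fst w) * p2 (snd w) * (indicator (A \<times> {b}) w * (g w - c))) = 0"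
  proof -
    have "(\<Sum>w\<in>W. p1 (fst w) * p2 (snd w) * (indicator (A \<times> {b}) w * (g w - c)))
        = (\<Sum>w\<in>A \<times> {b}. p1 (fst w) * p2 (snd w) * (g w - c))"
      by (rule sum_ind_restrict[OF fW]) (auto simp: W_def)
    also have "\<dots> = (\<Sum>a\<in>A. p1 a * p2 b * (g (a, b) - c))" unfolding sum_times_split by simp
    also have "\<dots> = p2 b * (ex A p1 (\<lambda>a. g (a, b)) - c * sum p1 A)"
      unfolding ex_def by (simp add: algebra_simps sum_subtractf sum_distrib_left)
    also have "\<dots> = 0" using p1(2) cred_sum[OF p1(1)] by simp
    finally show ?thesis .
  qed
  moreover have "(\<Sum>w\<in>W. p1 (fst w) * p2 (snd w) * D w) \<ge> 0"
    unfolding D_def by (rule KEY[OF p1(1) p2(1) _ WAB]) (auto simp: W_def)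
  ultimately show False by simp
qed

lemma C3:
  assumes a: "a \<in> A"
  shows "0 \<le> Max ((\<lambda>w. (G0 SP f0 w + G1 P1 f1 w + G2 P2 f2 w)
             - indicator ({a} \<times> B) w * (g w - P2 (\<lambda>b. g (a, b))))
          ` ({a} \<times> B \<union> (S0 A B f0 \<union> S1 A B f1 \<union> S2 A B f2)))"
proof (rule ccontr)
  define W where "W = {a} \<times> B \<union> (S0 A B f0 \<union> S1 A B f1 \<union> S2 A B f2)"
  define c where "c = P2 (\<lambda>b. g (a, b))"
  define D where "D w = G0 SP f0 w + G1 P1 f1 w + G2 P2 f2 w" for w
  define X where "X w = D w - indicator ({a} \<times> B) w * (g w - c)" for w
  have WAB: "W \<subseteq> A \<times> B" unfolding W_def using U_sub a by blast
  have fW: "finite W" using finite_subset[OF WAB fAB] .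
  have neW: "W \<noteq> {}" unfolding W_def using n2 by blast
  assume "\<not> ?thesis"
  hence "Max (X ` W) < 0" unfolding X_def D_def W_def c_def by simp
  hence Xneg: "X w < 0" if "w \<in> W" for w using fW neW that by (simp add: Max_less_iff)
  obtain p2 where p2: "p2 \<in> cred B P2" "ex B p2 (\<lambda>b. g (a, b)) = c"
    using envelope[OF c2 f2 n2] unfolding c_def by blast
  obtain p1 where p1: "p1 \<in> cred A P1" "p1 a > 0" using cred_posit[OF c1 f1 n1 a u1[OF a]] by blast
  obtain b0 where b0: "b0 \<in> B" "p2 b0 > 0" using cred_some_pos[OF p2(1) f2] by blast
  have "(\<Sum>w\<in>W. p1 (fst w) * p2 (snd w) * X w) < 0"
    by (rule sum_neg_strict[OF fW, of "(a, b0)"])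
       (use b0 p1 Xneg WAB pi_nonneg[OF p1(1) p2(1)] W_def in auto)
  moreover have "(\<Sum>w\<in>W. p1 (fst w) * p2 (snd w) * X w) =
     (\<Sum>w\<in>W. p1 (fst w) * p2 (snd w) * D w) -
     (\<Sum>w\<in>W. p1 (fst w) * p2 (snd w) * (indicator ({a} \<times> B) w * (g w - c)))"
    unfolding X_def by (simp add: right_diff_distrib sum_subtractf)
  moreover have "(\<Sum>w\<in>W. p1 (fst w) * p2 (snd w) * (indicator ({a} \<times> B) w * (g w - c))) = 0"
  proof -
    have "(\<Sum>w\<in>W. p1 (fst w) * p2 (snd w) * (indicator ({a} \<times> B) w * (g w - c)))
        = (\<Sum>w\<in>{a} \<times> B. p1 (fst w) * p2 (snd w) * (g w - c))"
      by (rule sum_ind_restrict[OF fW]) (auto simp: W_def)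
    also have "\<dots> = (\<Sum>b\<in>B. p1 a * p2 b * (g (a, b) - c))" unfolding sum_times_split by simp
    also have "\<dots> = p1 a * (ex B p2 (\<lambda>b. g (a, b)) - c * sum p2 B)"
      unfolding ex_def by (simp add: algebra_simps sum_subtractf sum_distrib_left)
    also have "\<dots> = 0" using p2(2) cred_sum[OF p2(1)] by simp
    finally show ?thesis .
  qed
  moreover have "(\<Sum>w\<in>W. p1 (fst w) * p2 (snd w) * D w) \<ge> 0"
    unfolding D_def by (rule KEY[OF p1(1) p2(1) _ WAB]) (auto simp: W_def)
  ultimately show False by simp
qed

lemma sprod_jc: "jointly_coherent A B SP P1 P2"
  unfolding jointly_coherent_def Let_def
  by (intro allI conjI ballI C1 C2 C3)

lemma sprod_indep: "indep_product A B P1 P2 SP"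
  unfolding indep_product_def
  using cSP sprod_marg1[OF c1 f1 n1 c2 f2 n2] sprod_marg2[OF c1 f1 n1 c2 f2 n2] sprod_jc by blast

end



lemma ine_eq: "indep_nat_ext A B P1 P2 f = Inf ((\<lambda>P. P f) ` {P. indep_product A B P1 P2 P})"
  unfolding indep_nat_ext_def by (simp add: image_def) (metis)

lemma factorization:
  assumes ip: "indep_product A B P1 P2 P" and c1: "coherent_on A P1"
    and fA: "finite A" "A \<noteq> {}" and fB: "finite B" "B \<noteq> {}" and t: "P2 h \<ge> 0"
  shows "P (\<lambda>(a, b). indicator {o'} a * h b) \<ge> P1 (indicator {o'}) * P2 h"
proof -
  define t where "t = P2 h"
  define s where "s = P1 (indicator {o'})"
  define g where "g = (\<lambda>(a, b). indicator {o'} a * h b :: real)"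
  define f1 where "f1 = (\<lambda>(a::'a, b::'b). t * indicator {o'} a :: real)"
  have cP: "coherent_on (A \<times> B) P" using ip unfolding indep_product_def by blast
  have m2: "P (\<lambda>(a, b). h' b) = P2 h'" for h' using ip unfolding indep_product_def by blast
  have jc: "jointly_coherent A B P P1 P2" using ip unfolding indep_product_def by blast
  have jc1: "0 \<le> Max ((\<lambda>w. (G0 P f0 w + G1 P1 f1 w + G2 P2 f2 w) - (g w - P g))
          ` (A \<times> B \<union> (S0 A B f0 \<union> S1 A B f1 \<union> S2 A B f2)))" for f0 f1 f2 g
    using jc unfolding jointly_coherent_def Let_def by blast
  have "(\<lambda>(a::'a, b::'b). (0::real)) = (\<lambda>_. 0)" by auto
  hence P20: "P2 (\<lambda>_. 0) = 0" using m2[of "\<lambda>_. 0"] coh_zero[OF cP] by simp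
  have val: "(G0 P (\<lambda>_. 0) w + G1 P1 f1 w + G2 P2 g w) - (g w - P g) = P g - t * s" for w
  proof -
    obtain a b where w: "w = (a, b)" by (cases w)
    have "G0 P (\<lambda>_. 0) w = 0" unfolding G0_def using coh_zero[OF cP] by simp
    moreover have "G1 P1 f1 w = t * indicator {o'} a - t * s"
      unfolding G1_def f1_def w s_def using coh_hom[OF c1, of t "indicator {o'}"] t t_def by simp
    moreover have "G2 P2 g w = indicator {o'} a * (h b - t)"
    proof (cases "a = o'")
      case True thus ?thesis unfolding G2_def g_def w t_def by simp
    next
      case False thus ?thesis unfolding G2_def g_def w using P20 by simp
    qed
    moreover have "g w = indicator {o'} a * h b" unfolding g_def w by simp
    ultimately show ?thesis by (simp add: algebra_simps)
  qed
  have U: "A \<times> B \<union> (S0 A B (\<lambda>_. 0) \<union> S1 A B f1 \<union> S2 A B g) = A \<times> B"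
    unfolding S0_def S1_def S2_def by auto
  have "(\<lambda>w. (G0 P (\<lambda>_. 0) w + G1 P1 f1 w + G2 P2 g w) - (g w - P g))
          ` (A \<times> B \<union> (S0 A B (\<lambda>_. 0) \<union> S1 A B f1 \<union> S2 A B g)) = {P g - t * s}"
    unfolding U val using fA fB by auto
  hence "0 \<le> P g - t * s" using jc1[of "\<lambda>_. 0" f1 g g] by simp
  thus ?thesis unfolding g_def t_def s_def by (simp add: mult.commute)
qed

context spsetup begin

abbreviation "N \<equiv> indep_nat_ext A B P1 P2"
abbreviation "Pi_set \<equiv> {P. indep_product A B P1 P2 P}"

lemma Pi_ne: "Pi_set \<noteq> {}" using sprod_indep by blast

lemma Pi_coh: "P \<in> Pi_set \<Longrightarrow> coherent_on (A \<times> B) P" unfolding indep_product_def by blast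

lemma N_coh: "coherent_on (A \<times> B) N"
  unfolding ine_eq[abs_def] by (rule inf_coh[OF Pi_ne Pi_coh])

lemma N_le: "indep_product A B P1 P2 P \<Longrightarrow> N f \<le> P f"
  unfolding ine_eq by (rule inf_le[OF _ Pi_coh]) auto

lemma N_ge: "(\<And>P. indep_product A B P1 P2 P \<Longrightarrow> c \<le> P f) \<Longrightarrow> c \<le> N f"
  unfolding ine_eq by (rule cInf_greatest) (use Pi_ne in auto)

lemma N_pos: "v \<in> A \<times> B \<Longrightarrow> upper N (indicator {v}) > 0"
proof -
  assume v: "v \<in> A \<times> B"
  obtain a b where ab: "v = (a, b)" "a \<in> A" "b \<in> B" using v by auto
  obtain p1 where p1: "p1 \<in> cred A P1" "p1 a > 0" using cred_posit[OF c1 f1 n1 ab(2) u1[OF ab(2)]] by blast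
  obtain p2 where p2: "p2 \<in> cred B P2" "p2 b > 0" using cred_posit[OF c2 f2 n2 ab(3) u2[OF ab(3)]] by blast
  have "N (\<lambda>x. - indicator {v} x) \<le> SP (\<lambda>x. - indicator {v} x)" by (rule N_le[OF sprod_indep])
  also have "\<dots> \<le> ex2 A B p1 p2 (\<lambda>x. - indicator {v} x)" by (rule sprod_le[OF f1 f2 p1(1) p2(1)])
  also have "\<dots> = - (p1 a * p2 b)" unfolding ex2_def using ex_nind[OF fAB v] ab(1) by simp
  moreover have "p1 a * p2 b > 0" using p1(2) p2(2) by simp
  ultimately show ?thesis unfolding upper_def by linarith
qed

end



lemma coh_comp:
  assumes "coherent_on A P" "finite A" "A \<noteq> {}" "finite C" "\<And>x. x \<in> A \<Longrightarrow> phi x \<in> C"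
  shows "coherent_on C (\<lambda>g. P (\<lambda>x. g (phi x)))"
  unfolding coherent_on_def
proof (intro conjI allI impI)
  fix g :: "'b \<Rightarrow> real"
  have "Min ((\<lambda>x. g (phi x)) ` A) \<le> P (\<lambda>x. g (phi x))" by (rule coh_Min[OF assms(1)])
  moreover have "Min (g ` C) \<le> Min ((\<lambda>x. g (phi x)) ` A)"
    by (rule Min_antimono) (use assms in auto)
  ultimately show "Min (g ` C) \<le> P (\<lambda>x. g (phi x))" by simp
next
  fix c :: real and f :: "'b \<Rightarrow> real" assume "c \<ge> 0"
  thus "P (\<lambda>x. c * f (phi x)) = c * P (\<lambda>x. f (phi x))" using coh_hom[OF assms(1), of c "\<lambda>x. f (phi x)"] by simp
next
  fix f g :: "'b \<Rightarrow> real"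
  show "P (\<lambda>x. f (phi x)) + P (\<lambda>x. g (phi x)) \<le> P (\<lambda>x. f (phi x) + g (phi x))"
    using coh_add[OF assms(1), of "\<lambda>x. f (phi x)" "\<lambda>x. g (phi x)"] by simp
qed

lemma coh_mix:
  assumes cQ: "coherent_on X Q" and fX: "finite X" "X \<noteq> {}"
    and cE: "\<And>z. z \<in> X \<Longrightarrow> coherent_on C (E z)" and fC: "finite C" "C \<noteq> {}"
    and fB: "finite B" and mp: "\<And>z w. z \<in> X \<Longrightarrow> w \<in> C \<Longrightarrow> phi z w \<in> B"
  shows "coherent_on B (\<lambda>h. Q (\<lambda>z. E z (\<lambda>w. h (phi z w))))"
  unfolding coherent_on_def
proof (intro conjI allI impI)
  fix h :: "'c \<Rightarrow> real"
  have "Min (h ` B) \<le> E z (\<lambda>w. h (phi z w))" if z: "z \<in> X" for z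
  proof -
    have "Min (h ` B) \<le> Min ((\<lambda>w. h (phi z w)) ` C)"
      by (rule Min_antimono) (use fC fB mp z in auto)
    also have "\<dots> \<le> E z (\<lambda>w. h (phi z w))" by (rule coh_Min[OF cE[OF z]])
    finally show ?thesis .
  qed
  hence "Min (h ` B) \<le> Min ((\<lambda>z. E z (\<lambda>w. h (phi z w))) ` X)" using fX by (simp add: Min_ge_iff)
  also have "\<dots> \<le> Q (\<lambda>z. E z (\<lambda>w. h (phi z w)))" by (rule coh_Min[OF cQ])
  finally show "Min (h ` B) \<le> Q (\<lambda>z. E z (\<lambda>w. h (phi z w)))" .
next
  fix c :: real and h :: "'c \<Rightarrow> real" assume c: "c \<ge> 0"
  have "Q (\<lambda>z. E z (\<lambda>w. c * h (phi z w))) = Q (\<lambda>z. c * E z (\<lambda>w. h (phi z w)))"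
    by (rule coh_cong[OF cQ fX]) (rule coh_hom[OF cE c])
  also have "\<dots> = c * Q (\<lambda>z. E z (\<lambda>w. h (phi z w)))" by (rule coh_hom[OF cQ c])
  finally show "Q (\<lambda>z. E z (\<lambda>w. c * h (phi z w))) = c * Q (\<lambda>z. E z (\<lambda>w. h (phi z w)))" .
next
  fix f g :: "'c \<Rightarrow> real"
  have "Q (\<lambda>z. E z (\<lambda>w. f (phi z w))) + Q (\<lambda>z. E z (\<lambda>w. g (phi z w)))
      \<le> Q (\<lambda>z. E z (\<lambda>w. f (phi z w)) + E z (\<lambda>w. g (phi z w)))" by (rule coh_add[OF cQ])
  also have "\<dots> \<le> Q (\<lambda>z. E z (\<lambda>w. f (phi z w) + g (phi z w)))"
    by (rule coh_mono[OF cQ fX]) (rule coh_add[OF cE])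
  finally show "Q (\<lambda>z. E z (\<lambda>w. f (phi z w))) + Q (\<lambda>z. E z (\<lambda>w. g (phi z w)))
      \<le> Q (\<lambda>z. E z (\<lambda>w. f (phi z w) + g (phi z w)))" .
qed

lemma PiE_upd_in: "x \<in> PiE {Suc K..n} X \<Longrightarrow> zk \<in> X K \<Longrightarrow> K \<le> n \<Longrightarrow> x(K := zk) \<in> PiE {K..n} X"
proof -
  assume a: "x \<in> PiE {Suc K..n} X" "zk \<in> X K" "K \<le> n"
  have "{K..n} = insert K {Suc K..n}" using a(3) by auto
  thus ?thesis using PiE_fun_upd[OF a(2) a(1)] by simp
qed

lemma PiE_undef_in: "x \<in> PiE {K..n} X \<Longrightarrow> x(K := undefined) \<in> PiE {Suc K..n} X"
  unfolding PiE_iff extensional_def by auto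

lemma PiE_at: "x \<in> PiE {Suc K..n} X \<Longrightarrow> x K = undefined"
  unfolding PiE_iff extensional_def by auto

lemma upd_eq_iff: "x' K = undefined \<Longrightarrow> (x'(K := v) = x) \<longleftrightarrow> (x' = x(K := undefined) \<and> v = x K)"
  by (auto simp: fun_eq_iff)

locale hmm =
  fixes n :: nat and Xs :: "nat \<Rightarrow> 'x set" and Os :: "nat \<Rightarrow> 'o set"
    and Q :: "nat \<Rightarrow> 'x \<Rightarrow> ('x \<Rightarrow> real) \<Rightarrow> real"
    and S :: "nat \<Rightarrow> 'x \<Rightarrow> ('o \<Rightarrow> real) \<Rightarrow> real"
  assumes n: "n \<ge> 1"
    and Xfin: "\<And>i. i \<in> {1..n} \<Longrightarrow> finite (Xs i) \<and> Xs i \<noteq> {}"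
    and Ofin: "\<And>i. i \<in> {1..n} \<Longrightarrow> finite (Os i) \<and> Os i \<noteq> {}"
    and Qcoh: "\<And>i y. i \<in> {1..n} \<Longrightarrow> y \<in> Xs (i - 1) \<Longrightarrow> coherent_on (Xs i) (Q i y)"
    and Scoh: "\<And>i y. i \<in> {1..n} \<Longrightarrow> y \<in> Xs i \<Longrightarrow> coherent_on (Os i) (S i y)"
    and Qpos: "\<And>i y x. i \<in> {1..n} \<Longrightarrow> y \<in> Xs (i - 1) \<Longrightarrow> x \<in> Xs i \<Longrightarrow>
                 upper (Q i y) (indicator {x}) > 0"
    and Spos: "\<And>i y p. i \<in> {1..n} \<Longrightarrow> y \<in> Xs i \<Longrightarrow> p \<in> Os i \<Longrightarrow>
                 upper (S i y) (indicator {p}) > 0"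
begin

abbreviation "E \<equiv> Erec n Xs Os Q S"

definition dom :: "nat \<Rightarrow> ((nat \<Rightarrow> 'x) \<times> (nat \<Rightarrow> 'o)) set" where
  "dom j = PiE {Suc (n - j)..n} Xs \<times> PiE {n - j..n} Os"

definition P2f :: "nat \<Rightarrow> nat \<Rightarrow> 'x \<Rightarrow> ((nat \<Rightarrow> 'x) \<times> (nat \<Rightarrow> 'o) \<Rightarrow> real) \<Rightarrow> real" where
  "P2f k j z = (\<lambda>h. Q (Suc k) z (\<lambda>zk. E j zk (\<lambda>w. h ((fst w)(Suc k := zk), snd w))))"

definition Bk :: "nat \<Rightarrow> ((nat \<Rightarrow> 'x) \<times> (nat \<Rightarrow> 'o)) set" where
  "Bk k = PiE {Suc k..n} Xs \<times> PiE {Suc k..n} Os"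

lemma Erec_Suc: "n - Suc j = k \<Longrightarrow>
  E (Suc j) z g = indep_nat_ext (Os k) (Bk k) (S k z) (P2f k j z) (\<lambda>v. g (fst (snd v), (snd (snd v))(k := fst v)))"
  unfolding Bk_def P2f_def by (simp add: Let_def case_prod_beta')

lemma XfinI: "1 \<le> i \<Longrightarrow> i \<le> n \<Longrightarrow> finite (Xs i) \<and> Xs i \<noteq> {}" using Xfin by auto
lemma OfinI: "1 \<le> i \<Longrightarrow> i \<le> n \<Longrightarrow> finite (Os i) \<and> Os i \<noteq> {}" using Ofin by auto

lemma fin_PiX: "1 \<le> a \<Longrightarrow> finite (PiE {a..n} Xs) \<and> PiE {a..n} Xs \<noteq> {}"
  using XfinI by (auto simp: PiE_eq_empty_iff intro!: finite_PiE)
lemma fin_PiO: "1 \<le> a \<Longrightarrow> finite (PiE {a..n} Os) \<and> PiE {a..n} Os \<noteq> {}"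
  using OfinI by (auto simp: PiE_eq_empty_iff intro!: finite_PiE)

lemma fin_dom: "j < n \<Longrightarrow> finite (dom j) \<and> dom j \<noteq> {}"
  unfolding dom_def using fin_PiX[of "Suc (n - j)"] fin_PiO[of "n - j"] by auto

lemma fin_Bk: "finite (Bk k) \<and> Bk k \<noteq> {}"
  unfolding Bk_def using fin_PiX[of "Suc k"] fin_PiO[of "Suc k"] by auto

definition inv :: "nat \<Rightarrow> bool" where
  "inv j \<longleftrightarrow> (\<forall>z\<in>Xs (n - j). coherent_on (dom j) (E j z) \<and>
      (\<forall>w\<in>dom j. upper (E j z) (indicator {w}) > 0))"

lemma inv0: "inv 0"
  unfolding inv_def
proof (intro ballI conjI)
  fix z assume z: "z \<in> Xs (n - 0)"
  define u where "u = (\<lambda>_::nat. undefined :: 'x)"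
  define uo where "uo = (\<lambda>_::nat. undefined :: 'o)"
  have Sc: "coherent_on (Os n) (S n z)" using Scoh[of n z] z n by simp
  have On: "finite (Os n) \<and> Os n \<noteq> {}" using OfinI[of n] n by simp
  have Ez: "E 0 z = (\<lambda>g. S n z (\<lambda>on. g (u, uo(n := on))))" unfolding u_def uo_def by (rule ext) simp
  have d0: "dom 0 = {u} \<times> PiE {n..n} Os" unfolding dom_def u_def by simp
  show "coherent_on (dom 0) (E 0 z)"
    unfolding Ez
  proof (rule coh_comp[OF Sc conjunct1[OF On] conjunct2[OF On]])
    show "finite (dom 0)" using fin_dom[of 0] n by simp
    fix on assume "on \<in> Os n"
    thus "(u, uo(n := on)) \<in> dom 0" unfolding d0 uo_def by (auto simp: PiE_iff extensional_def)
  qed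
  fix w assume w: "w \<in> dom 0"
  define y where "y = snd w"
  have wy: "w = (u, y)" "y \<in> PiE {n..n} Os" using w unfolding d0 y_def by (simp_all add: mem_Times_iff prod_eq_iff)
  have yn1: "y n \<in> Os n" using wy(2) by (simp add: PiE_iff)
  have yn2: "y = uo(n := y n)"
  proof
    fix i show "y i = (uo(n := y n)) i"
    proof (cases "i = n")
      case True thus ?thesis by simp
    next
      case False
      hence "i \<notin> {n..n}" by simp
      hence "y i = undefined" using wy(2) by (rule PiE_arb[rotated])
      thus ?thesis using False unfolding uo_def by simp
    qed
  qed
  note yn = yn1 yn2
  have "(\<lambda>on. indicator {w} (u, uo(n := on))) = (indicator {y n} :: 'o \<Rightarrow> real)"
  proof
    fix on
    have "(uo(n := on) = y) \<longleftrightarrow> on = y n"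
    proof
      assume "uo(n := on) = y" thus "on = y n" by (metis fun_upd_same)
    next
      assume "on = y n" thus "uo(n := on) = y" using yn(2) by metis
    qed
    thus "indicator {w} (u, uo(n := on)) = (indicator {y n} on :: real)" unfolding wy by (auto simp: indicator_def)
  qed
  hence "upper (E 0 z) (indicator {w}) = upper (S n z) (indicator {y n})"
    unfolding Ez upper_def by (simp add: fun_eq_iff)
  thus "upper (E 0 z) (indicator {w}) > 0" using Spos[of n z "y n"] n z yn(1) by simp
qed

end



context hmm begin

lemma P2_props:
  assumes j: "Suc j < n" and ij: "inv j" and k: "n - Suc j = k" and z: "z \<in> Xs k"
  shows "coherent_on (Bk k) (P2f k j z) \<and> (\<forall>w\<in>Bk k. upper (P2f k j z) (indicator {w}) > 0)"
proof
  have k1: "1 \<le> k" "Suc k \<le> n" "n - j = Suc k" using j k by auto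
  have dj: "dom j = PiE {Suc (Suc k)..n} Xs \<times> PiE {Suc k..n} Os" unfolding dom_def using k1 by simp
  have cQ: "coherent_on (Xs (Suc k)) (Q (Suc k) z)" using Qcoh[of "Suc k" z] z k1 by simp
  have fX: "finite (Xs (Suc k))" "Xs (Suc k) \<noteq> {}" using XfinI[of "Suc k"] k1 by auto
  have cE: "coherent_on (dom j) (E j zk)" "\<forall>w\<in>dom j. upper (E j zk) (indicator {w}) > 0"
    if "zk \<in> Xs (Suc k)" for zk
    using ij that k1 unfolding inv_def by auto
  have fD: "finite (dom j)" "dom j \<noteq> {}" using fin_dom[of j] j by auto
  have mp: "((fst w)(Suc k := zk), snd w) \<in> Bk k" if "zk \<in> Xs (Suc k)" "w \<in> dom j" for zk w
    using that unfolding dj Bk_def using PiE_upd_in[of "fst w" "Suc k" n Xs zk] k1 by (auto simp: mem_Times_iff)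
  show "coherent_on (Bk k) (P2f k j z)"
    unfolding P2f_def
    by (rule coh_mix[OF cQ fX(1) fX(2) cE(1) fD(1) fD(2) conjunct1[OF fin_Bk] mp])
  show "\<forall>w\<in>Bk k. upper (P2f k j z) (indicator {w}) > 0"
  proof
    fix w assume w: "w \<in> Bk k"
    define x where "x = fst w"
    define y where "y = snd w"
    have wxy: "w = (x, y)" unfolding x_def y_def by simp
    have x: "x \<in> PiE {Suc k..n} Xs" and y: "y \<in> PiE {Suc k..n} Os"
      using w unfolding Bk_def x_def y_def by (auto simp: mem_Times_iff)
    have xK: "x (Suc k) \<in> Xs (Suc k)" using x k1 by (simp add: PiE_iff)
    define w0 where "w0 = (x(Suc k := undefined), y)"
    have w0: "w0 \<in> dom j" unfolding w0_def dj using PiE_undef_in[OF x] y by simp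
    define u where "u = upper (E j (x (Suc k))) (indicator {w0})"
    have u: "u > 0" using cE(2)[OF xK] w0 unfolding u_def by blast
    have H: "E j zk (\<lambda>w'. - indicator {w} ((fst w')(Suc k := zk), snd w')) = u * (- indicator {x (Suc k)} zk)"
      if zk: "zk \<in> Xs (Suc k)" for zk
    proof (cases "zk = x (Suc k)")
      case True
      have "E j zk (\<lambda>w'. - indicator {w} ((fst w')(Suc k := zk), snd w')) = E j zk (\<lambda>w'. - indicator {w0} w')"
      proof (rule coh_cong[OF cE(1)[OF zk] fD])
        fix w' assume w': "w' \<in> dom j"
        have "fst w' (Suc k) = undefined" using w' unfolding dj by (auto simp: mem_Times_iff intro: PiE_at)
        hence "(((fst w')(Suc k := zk), snd w') = w) \<longleftrightarrow> (w' = w0)"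
          unfolding wxy w0_def using upd_eq_iff[of "fst w'" "Suc k" zk x] True by (auto simp: prod_eq_iff)
        thus "- indicator {w} ((fst w')(Suc k := zk), snd w') = (- indicator {w0} w' :: real)"
          by (auto simp: indicator_def)
      qed
      also have "\<dots> = - u" unfolding u_def upper_def True by simp
      finally show ?thesis using True by simp
    next
      case False
      have "(\<lambda>w'. - indicator {w} ((fst w')(Suc k := zk), snd w')) = (\<lambda>_. 0 :: real)"
      proof
        fix w'
        have "((fst w')(Suc k := zk), snd w') \<noteq> w" unfolding wxy using False by (auto simp: prod_eq_iff)
        thus "- indicator {w} ((fst w')(Suc k := zk), snd w') = (0::real)" by (simp add: indicator_def)
      qed
      thus ?thesis using coh_zero[OF cE(1)[OF zk]] False by simp
    qed
    have "P2f k j z (\<lambda>v. - indicator {w} v) = Q (Suc k) z (\<lambda>zk. u * (- indicator {x (Suc k)} zk))"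
      unfolding P2f_def by (rule coh_cong[OF cQ fX]) (rule H)
    also have "\<dots> = u * Q (Suc k) z (\<lambda>zk. - indicator {x (Suc k)} zk)"
      by (rule coh_hom[OF cQ]) (use u in simp)
    also have "Q (Suc k) z (\<lambda>zk. - indicator {x (Suc k)} zk) = - upper (Q (Suc k) z) (indicator {x (Suc k)})"
      unfolding upper_def by simp
    finally have "upper (P2f k j z) (indicator {w}) = u * upper (Q (Suc k) z) (indicator {x (Suc k)})"
      unfolding upper_def by simp
    moreover have "upper (Q (Suc k) z) (indicator {x (Suc k)}) > 0" using Qpos[of "Suc k" z "x (Suc k)"] k1 z xK by simp
    ultimately show "upper (P2f k j z) (indicator {w}) > 0" using u by simp
  qed
qed

lemma sp_setup:
  assumes j: "Suc j < n" and ij: "inv j" and k: "n - Suc j = k" and z: "z \<in> Xs k"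
  shows "spsetup (Os k) (Bk k) (S k z) (P2f k j z)"
proof -
  have k1: "1 \<le> k" "Suc k \<le> n" using j k by auto
  show ?thesis unfolding spsetup_def
    using Scoh[of k z] OfinI[of k] k1 z P2_props[OF assms] fin_Bk Spos[of k z] by auto
qed

lemma inv_step:
  assumes j: "Suc j < n" and ij: "inv j"
  shows "inv (Suc j)"
  unfolding inv_def
proof (intro ballI conjI)
  define k where "k = n - Suc j"
  have k1: "1 \<le> k" "Suc k \<le> n" "n - Suc j = k" using j k_def by auto
  fix z assume z: "z \<in> Xs (n - Suc j)"
  hence z: "z \<in> Xs k" using k_def by simp
  interpret sp: spsetup "Os k" "Bk k" "S k z" "P2f k j z" by (rule sp_setup[OF j ij k1(3) z])
  define psi where "psi v = (fst (snd v), (snd (snd v))(k := fst v))" for v :: "'o \<times> (nat \<Rightarrow> 'x) \<times> (nat \<Rightarrow> 'o)"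
  have Ez: "E (Suc j) z = (\<lambda>g. indep_nat_ext (Os k) (Bk k) (S k z) (P2f k j z) (\<lambda>v. g (psi v)))"
    unfolding psi_def by (rule ext) (rule Erec_Suc[OF k1(3)])
  have dS: "dom (Suc j) = PiE {Suc k..n} Xs \<times> PiE {k..n} Os" unfolding dom_def using k1 by simp
  show "coherent_on (dom (Suc j)) (E (Suc j) z)"
    unfolding Ez
  proof (rule coh_comp[OF sp.N_coh sp.fAB sp.nAB])
    show "finite (dom (Suc j))" using fin_dom[of "Suc j"] j by simp
    fix v assume v: "v \<in> Os k \<times> Bk k"
    thus "psi v \<in> dom (Suc j)" unfolding psi_def dS Bk_def
      using PiE_upd_in[of "snd (snd v)" k n Os "fst v"] k1 by (auto simp: mem_Times_iff)
  qed
  fix w assume w: "w \<in> dom (Suc j)"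
  define x where "x = fst w"
  define p where "p = snd w"
  have wxp: "w = (x, p)" unfolding x_def p_def by simp
  have x: "x \<in> PiE {Suc k..n} Xs" and p: "p \<in> PiE {k..n} Os"
    using w unfolding dS x_def p_def by (auto simp: mem_Times_iff)
  define v0 where "v0 = (p k, (x, p(k := undefined)))"
  have v0: "v0 \<in> Os k \<times> Bk k" unfolding v0_def Bk_def using p x PiE_undef_in[OF p] k1
    by (auto simp: PiE_iff)
  have "indep_nat_ext (Os k) (Bk k) (S k z) (P2f k j z) (\<lambda>v. - indicator {w} (psi v))
      = indep_nat_ext (Os k) (Bk k) (S k z) (P2f k j z) (\<lambda>v. - indicator {v0} v)"
  proof (rule coh_cong[OF sp.N_coh sp.fAB sp.nAB])
    fix v assume v: "v \<in> Os k \<times> Bk k"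
    have "snd (snd v) k = undefined" using v unfolding Bk_def by (auto simp: mem_Times_iff intro: PiE_at)
    hence "(psi v = w) \<longleftrightarrow> (v = v0)"
      unfolding psi_def wxp v0_def using upd_eq_iff[of "snd (snd v)" k "fst v" p]
      by (auto simp: prod_eq_iff)
    thus "- indicator {w} (psi v) = (- indicator {v0} v :: real)" by (auto simp: indicator_def)
  qed
  hence "upper (E (Suc j) z) (indicator {w}) = upper (indep_nat_ext (Os k) (Bk k) (S k z) (P2f k j z)) (indicator {v0})"
    unfolding Ez upper_def by simp
  thus "upper (E (Suc j) z) (indicator {w}) > 0" using sp.N_pos[OF v0] by simp
qed

lemma inv_all: "j < n \<Longrightarrow> inv j"
proof (induction j)
  case 0 show ?case by (rule inv0)
next
  case (Suc j) thus ?case using inv_step by simp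
qed

end



theorem theorem2:
  fixes n :: nat and Xs :: "nat \<Rightarrow> 'x set" and Os :: "nat \<Rightarrow> 'o set"
    and x0 :: 'x
    and Q :: "nat \<Rightarrow> 'x \<Rightarrow> ('x \<Rightarrow> real) \<Rightarrow> real"
    and S :: "nat \<Rightarrow> 'x \<Rightarrow> ('o \<Rightarrow> real) \<Rightarrow> real"
    and os :: "nat \<Rightarrow> 'o" and k :: nat and z :: 'x and xh :: "nat \<Rightarrow> 'x"
  assumes n: "n \<ge> 1"
    and X0: "Xs 0 = {x0}"
    and Xfin: "\<And>i. i \<in> {1..n} \<Longrightarrow> finite (Xs i) \<and> Xs i \<noteq> {}"
    and Ofin: "\<And>i. i \<in> {1..n} \<Longrightarrow> finite (Os i) \<and> Os i \<noteq> {}"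
    and Qcoh: "\<And>i y. i \<in> {1..n} \<Longrightarrow> y \<in> Xs (i - 1) \<Longrightarrow> coherent_on (Xs i) (Q i y)"
    and Scoh: "\<And>i y. i \<in> {1..n} \<Longrightarrow> y \<in> Xs i \<Longrightarrow> coherent_on (Os i) (S i y)"
    and Qpos: "\<And>i y x. i \<in> {1..n} \<Longrightarrow> y \<in> Xs (i - 1) \<Longrightarrow> x \<in> Xs i \<Longrightarrow>
                 upper (Q i y) (indicator {x}) > 0"
    and Spos: "\<And>i y p. i \<in> {1..n} \<Longrightarrow> y \<in> Xs i \<Longrightarrow> p \<in> Os i \<Longrightarrow>
                 upper (S i y) (indicator {p}) > 0"
    and o_seq: "\<And>i. i \<in> {1..n} \<Longrightarrow> os i \<in> Os i"
    and k: "1 \<le> k" "k \<le> n - 1"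
    and z: "z \<in> Xs (k - 1)"
    and xh: "xh \<in> PiE {k..n} Xs"
    and Qhat: "Q k z (indicator {xh k}) > 0"
    and Shat: "S k (xh k) (indicator {os k}) > 0"
    and opt_k: "xh \<in> opt n Xs Os Q S k z os"
  shows "restrict xh {Suc k..n} \<in> opt n Xs Os Q S (Suc k) (xh k) os"
proof -
  interpret hmm n Xs Os Q S
    by (unfold_locales) (use n Xfin Ofin Qcoh Scoh Qpos Spos in auto)
  define j where "j = n - Suc k"
  have kk: "Suc j < n" "n - Suc j = k" "n - k = Suc j" "Suc k \<le> n" "k < n" using k n j_def by auto
  have ij: "inv j" using inv_all kk by simp
  have xhk: "xh k \<in> Xs k" using xh k by (simp add: PiE_iff)
  have cQ: "coherent_on (Xs k) (Q k z)" using Qcoh[of k z] k z kk by simp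
  have fXk: "finite (Xs k)" "Xs k \<noteq> {}" using XfinI[of k] k kk by auto
  have rin: "restrict xh {Suc k..n} \<in> PiE {Suc k..n} Xs" using xh by (auto simp: PiE_iff)
  have ball_upd: "k \<notin> I \<Longrightarrow> (\<forall>i\<in>I. (f(k := v)) i = g i) \<longleftrightarrow> (\<forall>i\<in>I. f i = g i)"
    for I and f g :: "nat \<Rightarrow> 'b" and v by auto
  have ball_upd2: "k \<notin> I \<Longrightarrow> (\<forall>i\<in>I. f i = (g(k := v)) i) \<longleftrightarrow> (\<forall>i\<in>I. f i = g i)"
    for I and f g :: "nat \<Rightarrow> 'b" and v by auto
  have kI: "k \<notin> {Suc k..n}" by simp
  have setk: "{k..n} = insert k {Suc k..n}" using kk by auto
  show ?thesis
    unfolding opt_def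
  proof (intro CollectI conjI ballI rin)
    fix x assume x: "x \<in> PiE {Suc k..n} Xs"
    define F2 where "F2 = (\<lambda>(x', p'). (if \<forall>i \<in> {Suc k..n}. p' i = os i then 1 else 0) *
                       ((if \<forall>i \<in> {Suc k..n}. x' i = x i then 1 else 0)
                        - (if \<forall>i \<in> {Suc k..n}. x' i = xh i then 1 else 0)) :: real)"
    have F2eq: "(\<lambda>(x', p'). (if \<forall>i \<in> {Suc k..n}. p' i = os i then 1 else 0) *
                       ((if \<forall>i \<in> {Suc k..n}. x' i = x i then 1 else 0)
                        - (if \<forall>i \<in> {Suc k..n}. x' i = restrict xh {Suc k..n} i then 1 else 0)) :: real) = F2"
      unfolding F2_def by (auto simp: fun_eq_iff)
    show "Phmm n Xs Os Q S (Suc k) (xh k)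
          (\<lambda>(x', p'). (if \<forall>i \<in> {Suc k..n}. p' i = os i then 1 else 0) *
                       ((if \<forall>i \<in> {Suc k..n}. x' i = x i then 1 else 0)
                        - (if \<forall>i \<in> {Suc k..n}. x' i = restrict xh {Suc k..n} i then 1 else 0))) \<le> 0"
      unfolding F2eq
    proof (rule ccontr)
      assume "\<not> Phmm n Xs Os Q S (Suc k) (xh k) F2 \<le> 0"
      hence tpos: "Phmm n Xs Os Q S (Suc k) (xh k) F2 > 0" by simp
      define t where "t = Phmm n Xs Os Q S (Suc k) (xh k) F2"
      define xx where "xx = x(k := xh k)"
      have xx: "xx \<in> PiE {k..n} Xs" unfolding xx_def by (rule PiE_upd_in[OF x xhk kk(4)[THEN Suc_leD]])
      define F1 where "F1 = (\<lambda>(x', p'). (if \<forall>i \<in> {k..n}. p' i = os i then 1 else 0) *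
                       ((if \<forall>i \<in> {k..n}. x' i = xx i then 1 else 0)
                        - (if \<forall>i \<in> {k..n}. x' i = xh i then 1 else 0)) :: real)"
      have le0: "Phmm n Xs Os Q S k z F1 \<le> 0" using opt_k xx unfolding opt_def F1_def by blast
      define H where "H zk = Ehmm n Xs Os Q S k zk (\<lambda>(x, y). F1 (x(k := zk), y))" for zk
      have PH: "Phmm n Xs Os Q S k z F1 = Q k z H" unfolding Phmm_def H_def ..
      have Hz: "H zk = indep_nat_ext (Os k) (Bk k) (S k zk) (P2f k j zk)
          (\<lambda>v. F1 ((fst (snd v))(k := zk), (snd (snd v))(k := fst v)))" for zk
        unfolding H_def Ehmm_def kk(3) Erec_Suc[OF kk(2)] by simp
      have H0: "H zk = 0" if zk: "zk \<in> Xs k" "zk \<noteq> xh k" for zk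
      proof -
        interpret sp: spsetup "Os k" "Bk k" "S k zk" "P2f k j zk" by (rule sp_setup[OF kk(1) ij kk(2) zk(1)])
        have "(\<lambda>v. F1 ((fst (snd v))(k := zk), (snd (snd v))(k := fst v))) = (\<lambda>_. 0)"
          unfolding F1_def xx_def using zk(2) kk by (auto simp: fun_eq_iff Ball_def)
        thus ?thesis unfolding Hz using coh_zero[OF sp.N_coh] by simp
      qed
      interpret sp: spsetup "Os k" "Bk k" "S k (xh k)" "P2f k j (xh k)" by (rule sp_setup[OF kk(1) ij kk(2) xhk])
      have Geq: "(\<lambda>v. F1 ((fst (snd v))(k := xh k), (snd (snd v))(k := fst v)))
           = (\<lambda>(a, b). indicator {os k} a * F2 b)"
      proof (rule ext)
        fix v :: "'o \<times> (nat \<Rightarrow> 'x) \<times> (nat \<Rightarrow> 'o)"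
        obtain ok x' p' where v: "v = (ok, x', p')" by (cases v) auto
        show "F1 ((fst (snd v))(k := xh k), (snd (snd v))(k := fst v)) = (\<lambda>(a, b). indicator {os k} a * F2 b) v"
          unfolding v F1_def F2_def xx_def setk
          by (simp add: ball_upd[OF kI] ball_upd2[OF kI] indicator_def)
      qed
      have P2t: "P2f k j (xh k) F2 = t"
        unfolding P2f_def t_def Phmm_def Ehmm_def j_def by (simp add: case_prod_beta')
      define s where "s = S k (xh k) (indicator {os k})"
      have s: "s > 0" using Shat s_def by simp
      have Hxh: "H (xh k) \<ge> s * t"
        unfolding Hz Geq
      proof (rule sp.N_ge)
        fix P assume "indep_product (Os k) (Bk k) (S k (xh k)) (P2f k j (xh k)) P"
        from factorization[OF this sp.c1 sp.f1 sp.n1 sp.f2 sp.n2, of F2 "os k"] P2t tpos t_def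
        show "s * t \<le> P (\<lambda>(a, b). indicator {os k} a * F2 b)" unfolding s_def by simp
      qed
      define c where "c = H (xh k)"
      have "s * t > 0" using s tpos t_def by simp
      hence c: "c > 0" using Hxh c_def by linarith
      have "Q k z (\<lambda>zk. c * indicator {xh k} zk) \<le> Q k z H"
      proof (rule coh_mono[OF cQ fXk])
        fix zk assume zk: "zk \<in> Xs k"
        show "c * indicator {xh k} zk \<le> H zk"
          using H0[OF zk] c_def by (cases "zk = xh k") auto
      qed
      moreover have "Q k z (\<lambda>zk. c * indicator {xh k} zk) = c * Q k z (indicator {xh k})"
        using coh_hom[OF cQ, of c "indicator {xh k}"] c by simp
      moreover have "c * Q k z (indicator {xh k}) > 0" using c Qhat by simp
      ultimately show False using le0 PH by simp
    qed
  qed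
qed


end
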